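(* Let $F$ be a continuous distribution function on $[0,\infty)$ with a density $f>0$ on $[0,\infty)$ and suppose $E(X^r)<\infty$ for some $r>2$, where $X\sim F$. Let $\lambda=f/\overline F$ be the hazard function. (a) Suppose $1/\lambda$ is differentiable on some interval $[x_0,\infty)$ and $\lim_{x\to\infty}\frac{d}{dx}(1/\lambda(x))=c<\infty$. Then $0\le c\le r^{-1}$; there exists $q\in\mathcal Q(\downarrow)$ such that $\sup_{x\ge0}\frac{\int_x^\infty q(F(t))\,dt/q(F(x))}{e(x)}<\infty$; and $$\lim_{x\to\infty}\frac{\sigma^2(x)}{e^2(x)}=\frac{1}{1-2c}.$$ (b) Suppose $\limsup_{x\to\infty}\overline F(x)^{1+\gamma}/f(x)<\infty$ for some $r^{-1}<\gamma<1/2$. Then there exists $q\in\mathcal Q(\downarrow)$ with $\int_0^\infty q(F(t))\,dt<\infty$ and $\sup_{x\ge0}e(x)q(F(x))<\infty$.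
   Context: $\overline F=1-F$; $e(x)=\int_x^\infty\overline F(t)\,dt/\overline F(x)$ is the mean residual life function; $\sigma^2(x)=\operatorname{Var}[X-x\mid X>x]$ is the residual variance function. $\mathcal Q(\downarrow)$ is the set of all continuous functions $q$ on $[0,1]$ that are monotone decreasing on $[0,1]$ and satisfy $\int_0^1 q(t)^{-2}\,dt<\infty$. Note that $F$ has finite variance since $r>2$. *)

theory Defs
  imports "HOL-Analysis.Analysis"
begin

definition survival :: "(real \<Rightarrow> real) \<Rightarrow> real \<Rightarrow> real" where
  "survival F x = 1 - F x"

definition mrl :: "(real \<Rightarrow> real) \<Rightarrow> real \<Rightarrow> real" where
  "mrl F x = integral {x..} (survival F) / survival F x"

text \<open>Residual variance function \<open>\<sigma>\<^sup>2(x) = Var[X - x | X > x]\<close> for a distribution with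
  density f: conditional second moment of \<open>X - x\<close> given \<open>X > x\<close> minus the square of the
  conditional mean \<open>e(x)\<close>.\<close>
definition resvar :: "(real \<Rightarrow> real) \<Rightarrow> (real \<Rightarrow> real) \<Rightarrow> real \<Rightarrow> real" where
  "resvar F f x = integral {x..} (\<lambda>t. (t - x)\<^sup>2 * f t) / survival F x - (mrl F x)\<^sup>2"

text \<open>The class Q(decreasing): continuous functions on [0,1], monotone decreasing there,
  with \<open>\<integral>_0^1 q(t)^(-2) dt < \<infinity>\<close> (integral of a nonnegative extended-valued function,
  so zeros of q contribute the value \<infinity>).\<close>
definition Qdown :: "(real \<Rightarrow> real) set" where
  "Qdown = {q. continuous_on {0..1} q \<and> antimono_on {0..1} q \<and>
      (\<integral>\<^sup>+ t. indicator {0..1} t * inverse (ennreal ((q t)\<^sup>2)) \<partial>lborel) < \<infinity>}"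

end

theory Submission
  imports Defs
begin



lemma lhopital_at_top_0:
  fixes f g f' g' :: "real \<Rightarrow> real"
  assumes f0: "(f \<longlongrightarrow> 0) at_top" and g0: "(g \<longlongrightarrow> 0) at_top"
    and gnz: "eventually (\<lambda>x. g x \<noteq> 0) at_top"
    and g'nz: "eventually (\<lambda>x. g' x \<noteq> 0) at_top"
    and df: "eventually (\<lambda>x. DERIV f x :> f' x) at_top"
    and dg: "eventually (\<lambda>x. DERIV g x :> g' x) at_top"
    and lim: "((\<lambda>x. f' x / g' x) \<longlongrightarrow> L) at_top"
  shows "((\<lambda>x. f x / g x) \<longlongrightarrow> L) at_top"
proof -
  have pos: "eventually (\<lambda>x. x > (0::real)) (at_right 0)"
    by (simp add: eventually_at_right_less)
  have "((\<lambda>x. f (inverse x) / g (inverse x)) \<longlongrightarrow> L) (at_right 0)"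
  proof (rule lhopital_right_0[where f'="\<lambda>x. f' (inverse x) * (- inverse (x^2))"
        and g'="\<lambda>x. g' (inverse x) * (- inverse (x^2))"])
    show "((\<lambda>x. f (inverse x)) \<longlongrightarrow> 0) (at_right 0)"
      using f0 by (simp add: filterlim_at_top_to_right)
    show "((\<lambda>x. g (inverse x)) \<longlongrightarrow> 0) (at_right 0)"
      using g0 by (simp add: filterlim_at_top_to_right)
    show "eventually (\<lambda>x. g (inverse x) \<noteq> 0) (at_right 0)"
      using gnz by (simp add: eventually_at_top_to_right)
    show "eventually (\<lambda>x. g' (inverse x) * (- inverse (x^2)) \<noteq> 0) (at_right 0)"
      using g'nz pos unfolding eventually_at_top_to_right
      by eventually_elim auto
    show "eventually (\<lambda>x. DERIV (\<lambda>x. f (inverse x)) x :> f' (inverse x) * (- inverse (x^2))) (at_right 0)"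
      using df pos unfolding eventually_at_top_to_right
      by eventually_elim (use DERIV_chain2[OF _ DERIV_inverse, where f=f] in \<open>auto simp: power2_eq_square inverse_mult_distrib\<close>)
    show "eventually (\<lambda>x. DERIV (\<lambda>x. g (inverse x)) x :> g' (inverse x) * (- inverse (x^2))) (at_right 0)"
      using dg pos unfolding eventually_at_top_to_right
      by eventually_elim (use DERIV_chain2[OF _ DERIV_inverse, where f=g] in \<open>auto simp: power2_eq_square inverse_mult_distrib\<close>)
    have "((\<lambda>x. f' (inverse x) / g' (inverse x)) \<longlongrightarrow> L) (at_right 0)"
      using lim by (simp add: filterlim_at_top_to_right)
    moreover have "eventually (\<lambda>x. f' (inverse x) / g' (inverse x) =
        f' (inverse x) * (- inverse (x^2)) / (g' (inverse x) * (- inverse (x^2)))) (at_right 0)"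
      using pos by eventually_elim auto
    ultimately show "((\<lambda>x. f' (inverse x) * (- inverse (x^2)) / (g' (inverse x) * (- inverse (x^2)))) \<longlongrightarrow> L) (at_right 0)"
      by (rule Lim_transform_eventually)
  qed
  then show ?thesis by (simp add: filterlim_at_top_to_right)
qed



lemma integral_pos_strict:
  fixes h :: "real \<Rightarrow> real"
  assumes int: "h integrable_on {x..y}" and xy: "x < y" and pos: "\<And>t. t \<in> {x..y} \<Longrightarrow> h t > 0"
  shows "integral {x..y} h > 0"
proof -
  have af: "h absolutely_integrable_on {x..y}"
    using int pos by (intro nonnegative_absolutely_integrable_1) (auto simp: less_imp_le)
  have ge: "integral {x..y} h \<ge> 0"
    using int pos by (intro integral_nonneg) (auto simp: less_imp_le)
  show ?thesis
  proof (rule ccontr)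
    assume "\<not> ?thesis"
    then have z: "integral {x..y} h = 0" using ge by simp
    have "set_lebesgue_integral lebesgue {x..y} h = integral {x..y} h"
      using af by (rule set_lebesgue_integral_eq_integral(2))
    with z have "(LINT t|lebesgue. indicator {x..y} t *\<^sub>R h t) = 0"
      by (simp add: set_lebesgue_integral_def)
    then have "AE t in lebesgue. indicator {x..y} t *\<^sub>R h t = 0"
      using af pos
      by (subst (asm) integral_nonneg_eq_0_iff_AE)
         (auto simp: set_integrable_def indicator_def less_imp_le)
    then have "AE t in lebesgue. t \<notin> {x..y}"
      by eventually_elim (use pos in \<open>fastforce simp: indicator_def split: if_splits\<close>)
    then have "{x..y} \<in> null_sets lebesgue"
      by (subst AE_iff_null_sets) auto
    then have "emeasure lebesgue {x..y} = 0" by auto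
    with xy show False by simp
  qed
qed



lemma mono_bounded_tendsto:
  fixes \<phi> :: "real \<Rightarrow> real"
  assumes mono: "\<And>y z. a \<le> y \<Longrightarrow> y \<le> z \<Longrightarrow> \<phi> y \<le> \<phi> z"
    and bd: "\<And>y. a \<le> y \<Longrightarrow> \<phi> y \<le> B"
  shows "\<exists>l. (\<phi> \<longlongrightarrow> l) at_top"
proof -
  have bdd: "bdd_above (\<phi> ` {a..})" using bd by (auto intro!: bdd_aboveI2)
  define l where "l = (SUP y\<in>{a..}. \<phi> y)"
  have "(\<phi> \<longlongrightarrow> l) at_top"
  proof (rule increasing_tendsto)
    show "eventually (\<lambda>n. \<phi> n \<le> l) at_top"
      using eventually_ge_at_top[of a]
      by eventually_elim (auto simp: l_def intro!: cSUP_upper bdd)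
    fix x assume "x < l"
    then obtain y where y: "y \<in> {a..}" "x < \<phi> y"
      unfolding l_def using bdd by (subst (asm) less_cSUP_iff) auto
    show "eventually (\<lambda>n. x < \<phi> n) at_top"
      using eventually_ge_at_top[of y]
      by eventually_elim (use y mono in \<open>fastforce\<close>)
  qed
  then show ?thesis by blast
qed

lemma tail_integrable:
  fixes h :: "real \<Rightarrow> real"
  assumes int: "\<And>y. h integrable_on {a..y}" and nn: "\<And>t. t \<ge> a \<Longrightarrow> h t \<ge> 0"
    and bd: "\<And>y. integral {a..y} h \<le> B"
  shows "h integrable_on {a..}" "((\<lambda>y. integral {a..y} h) \<longlongrightarrow> integral {a..} h) at_top"
proof -
  have mono: "integral {a..y} h \<le> integral {a..z} h" if "a \<le> y" "y \<le> z" for y z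
    using that int nn by (intro integral_subset_le) auto
  obtain l where l: "((\<lambda>y. integral {a..y} h) \<longlongrightarrow> l) at_top"
    using mono_bounded_tendsto[of a "\<lambda>y. integral {a..y} h" B] mono bd by blast
  have "(h has_integral l) {a..}"
    by (rule has_integral_to_inf[OF int l nn])
  then show "h integrable_on {a..}" "((\<lambda>y. integral {a..y} h) \<longlongrightarrow> integral {a..} h) at_top"
    using l by (auto simp: integrable_on_def integral_unique)
qed

lemma tail_split:
  fixes h :: "real \<Rightarrow> real"
  assumes int: "h integrable_on {a..}" and nn: "\<And>t. t \<ge> a \<Longrightarrow> h t \<ge> 0" and x: "a \<le> x"
  shows "h integrable_on {x..}" "integral {x..} h = integral {a..} h - integral {a..x} h"
proof -
  have intab: "h integrable_on {a..y}" for y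
    by (rule integrable_on_subinterval[OF int]) auto
  have intxy: "h integrable_on {x..y}" for y
    by (rule integrable_on_subinterval[OF int]) (use x in auto)
  have bd: "integral {a..y} h \<le> integral {a..} h" for y
    using int intab nn by (intro integral_subset_le) auto
  have lim: "((\<lambda>y. integral {a..y} h) \<longlongrightarrow> integral {a..} h) at_top"
    using tail_integrable(2)[OF intab nn bd] .
  have eq: "eventually (\<lambda>y. integral {x..y} h = integral {a..y} h - integral {a..x} h) at_top"
    using eventually_ge_at_top[of x]
  proof eventually_elim
    case (elim y)
    then show ?case using Henstock_Kurzweil_Integration.integral_combine[where a=a and c=x and b=y and f=h] x intab by auto
  qed
  have bd2: "integral {x..y} h \<le> integral {a..} h - integral {a..x} h" for y
  proof (cases "y \<ge> x")
    case True
    then show ?thesis using Henstock_Kurzweil_Integration.integral_combine[where a=a and c=x and b=y and f=h] x intab bd[of y] by auto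
  next
    case False
    then have "integral {x..y} h = 0" by simp
    moreover have "integral {a..x} h \<le> integral {a..} h" by (rule bd)
    ultimately show ?thesis by simp
  qed
  show "h integrable_on {x..}"
    using tail_integrable(1)[OF intxy nn bd2] x by auto
  have l1: "((\<lambda>y. integral {x..y} h) \<longlongrightarrow> integral {x..} h) at_top"
    using tail_integrable(2)[OF intxy nn bd2] x by auto
  have l2: "((\<lambda>y. integral {x..y} h) \<longlongrightarrow> integral {a..} h - integral {a..x} h) at_top"
    by (rule Lim_transform_eventually[OF tendsto_diff[OF lim tendsto_const]])
       (use eq in \<open>auto elim: eventually_mono\<close>)
  show "integral {x..} h = integral {a..} h - integral {a..x} h"
    using tendsto_unique[OF _ l1 l2] by simp
qed

lemma tail_tendsto0:
  fixes h :: "real \<Rightarrow> real"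
  assumes int: "h integrable_on {a..}" and nn: "\<And>t. t \<ge> a \<Longrightarrow> h t \<ge> 0"
  shows "((\<lambda>x. integral {x..} h) \<longlongrightarrow> 0) at_top"
proof -
  have intab: "h integrable_on {a..y}" for y
    by (rule integrable_on_subinterval[OF int]) auto
  have bd: "integral {a..y} h \<le> integral {a..} h" for y
    using int intab nn by (intro integral_subset_le) auto
  have lim: "((\<lambda>y. integral {a..y} h) \<longlongrightarrow> integral {a..} h) at_top"
    using tail_integrable(2)[OF intab nn bd] .
  have "((\<lambda>x. integral {a..} h - integral {a..x} h) \<longlongrightarrow> integral {a..} h - integral {a..} h) at_top"
    by (intro tendsto_intros lim)
  then have "((\<lambda>x. integral {a..} h - integral {a..x} h) \<longlongrightarrow> 0) at_top" by simp
  moreover have "eventually (\<lambda>x. integral {a..} h - integral {a..x} h = integral {x..} h) at_top"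
    using eventually_ge_at_top[of a] by eventually_elim (rule tail_split(2)[OF int nn, symmetric])
  ultimately show ?thesis
    by (rule Lim_transform_eventually)
qed

lemma tail_deriv:
  fixes h :: "real \<Rightarrow> real"
  assumes int: "h integrable_on {a..}" and nn: "\<And>t. t \<ge> a \<Longrightarrow> h t \<ge> 0"
    and x: "a < x" and cont: "continuous_on {a..x+1} h"
  shows "((\<lambda>x. integral {x..} h) has_real_derivative - h x) (at x)"
proof -
  have "((\<lambda>u. integral {a..u} h) has_real_derivative h x) (at x within {a..x+1})"
    by (rule integral_has_real_derivative[OF cont]) (use x in auto)
  then have d: "((\<lambda>u. integral {a..u} h) has_real_derivative h x) (at x)"
    using at_within_interior[of x "{a..x+1}"] x by auto
  have "((\<lambda>u. integral {a..} h - integral {a..u} h) has_real_derivative - h x) (at x)"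
    using DERIV_diff[OF DERIV_const d] by simp
  then show ?thesis
  proof (rule has_field_derivative_transform_within_open[where S="{a<..}"])
    fix u assume "u \<in> {a<..}"
    then show "integral {a..} h - integral {a..u} h = integral {u..} h"
      by (intro tail_split(2)[OF int nn, symmetric]) auto
  qed (use x in auto)
qed



locale D =
  fixes F f :: "real \<Rightarrow> real" and r :: real
  assumes F_neg: "\<And>x. x < 0 \<Longrightarrow> F x = 0"
    and density: "\<And>x. x \<ge> 0 \<Longrightarrow> (f has_integral F x) {0..x}"
    and f_pos: "\<And>x. x \<ge> 0 \<Longrightarrow> f x > 0"
    and F_lim: "(F \<longlongrightarrow> 1) at_top"
    and F_cont: "continuous_on UNIV F"
    and r_gt: "r > 2"
    and moment: "(\<lambda>x. x powr r * f x) integrable_on {0..}"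
begin

abbreviation "s \<equiv> survival F"

lemma f_int0: "f integrable_on {0..x}"
  by (cases "x \<ge> 0") (use density in \<open>auto simp: integrable_on_def\<close>)

lemma F_eq: assumes "x \<ge> 0" shows "F x = integral {0..x} f"
  using integral_unique[OF density[OF assms]] by simp

lemma f_int: "0 \<le> y \<Longrightarrow> f integrable_on {y..z}"
  by (rule integrable_on_subinterval[OF f_int0[of z]]) auto

lemma f_nn: "t \<ge> 0 \<Longrightarrow> f t \<ge> 0" using f_pos[of t] by simp

lemma F0: "F 0 = 0" using F_eq[of 0] by simp

lemma F_nonneg: "F x \<ge> 0"
proof (cases "x \<ge> 0")
  case True
  have "integral {0..x} f \<ge> 0"
    by (rule integral_nonneg[OF f_int0]) (simp add: f_nn)
  then show ?thesis using F_eq[OF True] by simp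
qed (use F_neg in auto)

lemma F_diff: "0 \<le> x \<Longrightarrow> x \<le> y \<Longrightarrow> F y - F x = integral {x..y} f"
  using Henstock_Kurzweil_Integration.integral_combine[where a=0 and c=x and b=y and f=f] f_int0[of y]
  by (simp add: F_eq)

lemma F_strict: "0 \<le> x \<Longrightarrow> x < y \<Longrightarrow> F x < F y"
  using F_diff[of x y] integral_pos_strict[OF f_int[of x y]] f_pos by force

lemma F_mono: assumes "x \<le> y" shows "F x \<le> F y"
proof (cases "x < 0")
  case True
  then show ?thesis using F_neg[OF True] F_nonneg[of y] by simp
next
  case False
  note xy = assms
  show ?thesis
  proof (cases "x = y")
    case False
    then show ?thesis using F_strict[of x y] xy \<open>\<not> x < 0\<close> by simp
  qed simp
qed

lemma F_le1: "F x \<le> 1"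
proof (rule ccontr)
  assume "\<not> F x \<le> 1"
  have "F x \<le> 1"
  proof (rule tendsto_lowerbound[OF F_lim])
    show "eventually (\<lambda>i. F x \<le> F i) at_top"
      using eventually_ge_at_top[of x] by eventually_elim (rule F_mono)
  qed simp
  with \<open>\<not> F x \<le> 1\<close> show False by simp
qed

lemma F_less1: "F x < 1"
proof -
  have "F x \<le> F (max x 0)" by (rule F_mono) auto
  also have "\<dots> < F (max x 0 + 1)" by (rule F_strict) auto
  also have "\<dots> \<le> 1" by (rule F_le1)
  finally show ?thesis .
qed

lemma s_pos: "s x > 0" using F_less1 by (simp add: survival_def)
lemma s_le1: "s x \<le> 1" using F_nonneg by (simp add: survival_def)
lemma s_antimono: "x \<le> y \<Longrightarrow> s y \<le> s x" using F_mono by (simp add: survival_def)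
lemma s_strict: "0 \<le> x \<Longrightarrow> x < y \<Longrightarrow> s y < s x" using F_strict by (simp add: survival_def)
lemma s_cont: "continuous_on A s"
  unfolding survival_def by (intro continuous_intros continuous_on_subset[OF F_cont]) auto
lemma s_lim: "(s \<longlongrightarrow> 0) at_top"
  unfolding survival_def using tendsto_diff[OF tendsto_const[of 1] F_lim] by simp

lemma f_integrable: "f integrable_on {0..}" and f_total: "integral {0..} f = 1"
proof -
  have bd: "integral {0..y} f \<le> 1" for y
    by (cases "y \<ge> 0") (use F_eq[of y] F_le1[of y] in auto)
  show "f integrable_on {0..}"
    by (rule tail_integrable(1)[OF f_int0 _ bd]) (simp add: f_nn)
  have l: "((\<lambda>y. integral {0..y} f) \<longlongrightarrow> integral {0..} f) at_top"
    by (rule tail_integrable(2)[OF f_int0 _ bd]) (simp add: f_nn)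
  have "((\<lambda>y. integral {0..y} f) \<longlongrightarrow> 1) at_top"
    by (rule Lim_transform_eventually[OF F_lim]) (rule eventually_mono[OF eventually_ge_at_top[of 0]], rule F_eq, assumption)
  from tendsto_unique[OF trivial_limit_at_top_linorder l this] show "integral {0..} f = 1" .
qed

lemma s_tail: assumes "x \<ge> 0" shows "s x = integral {x..} f"
proof -
  have "integral {x..} f = integral {0..} f - integral {0..x} f"
    by (rule tail_split(2)[OF f_integrable _ assms]) (simp add: f_nn)
  then show ?thesis using F_eq[OF assms] by (simp add: survival_def f_total)
qed

end


lemma dominated_tail:
  fixes \<phi> m :: "real \<Rightarrow> real"
  assumes c: "continuous_on {a..} \<phi>" and nn: "\<And>t. t \<ge> a \<Longrightarrow> 0 \<le> \<phi> t"
    and le: "\<And>t. t \<ge> a \<Longrightarrow> \<phi> t \<le> m t" and m: "m integrable_on {a..}"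
  shows "\<phi> integrable_on {a..}"
proof -
  have i: "\<phi> integrable_on {a..y}" for y
    by (rule integrable_continuous_interval, rule continuous_on_subset[OF c]) auto
  have mi: "m integrable_on {a..y}" for y
    by (rule integrable_on_subinterval[OF m]) auto
  have "integral {a..y} \<phi> \<le> integral {a..} m" for y
  proof -
    have "integral {a..y} \<phi> \<le> integral {a..y} m"
      using i mi le by (intro integral_le) auto
    also have "\<dots> \<le> integral {a..} m"
      using mi m le nn by (intro integral_subset_le) (auto intro: order_trans)
    finally show ?thesis .
  qed
  then show ?thesis using tail_integrable(1)[OF i nn] by blast
qed

lemma powr_shift_integrable:
  fixes e :: real assumes e: "e > 1"
  shows "(\<lambda>t. (1 + t) powr (-e)) integrable_on {0..}"
proof -
  define P where "P t = - ((1 + t) powr (1 - e)) / (e - 1)" for t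
  have hi: "((\<lambda>t. (1 + t) powr (-e)) has_integral (P y - P 0)) {0..y}" if "y \<ge> 0" for y
  proof (rule fundamental_theorem_of_calculus[OF that])
    fix x assume x: "x \<in> {0..y}"
    have d1: "((\<lambda>t. 1 + t) has_real_derivative 1) (at x)" by (auto intro!: derivative_eq_intros)
    have "((\<lambda>t. (1 + t) powr (1 - e)) has_real_derivative (1 - e) * (1 + x) powr (1 - e - 1) * 1) (at x)"
      using DERIV_chain2[OF has_real_derivative_powr[of "1 + x" "1 - e"] d1] x by simp
    then have "((\<lambda>t. (- 1 / (e - 1)) * (1 + t) powr (1 - e)) has_real_derivative
        (- 1 / (e - 1)) * ((1 - e) * (1 + x) powr (1 - e - 1) * 1)) (at x)"
      by (rule DERIV_cmult)
    moreover have "(- 1 / (e - 1)) * ((1 - e) * (1 + x) powr (1 - e - 1) * 1) = (1 + x) powr (-e)"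
      using e by (simp add: field_simps)
    moreover have "(\<lambda>t. (- 1 / (e - 1)) * (1 + t) powr (1 - e)) = P"
      unfolding P_def by (auto simp: fun_eq_iff)
    ultimately have "(P has_real_derivative (1 + x) powr (-e)) (at x)" by simp
    then show "(P has_vector_derivative (1 + x) powr (-e)) (at x within {0..y})"
      by (simp add: has_real_derivative_iff_has_vector_derivative has_vector_derivative_at_within)
  qed
  have i: "(\<lambda>t. (1 + t) powr (-e)) integrable_on {0..y}" for y
    by (cases "y \<ge> 0") (use hi in \<open>auto simp: integrable_on_def\<close>)
  have "integral {0..y} (\<lambda>t. (1 + t) powr (-e)) \<le> 1 / (e - 1)" for y
  proof (cases "y \<ge> 0")
    case True
    then have "integral {0..y} (\<lambda>t. (1 + t) powr (-e)) = P y - P 0" using hi integral_unique by blast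
    also have "\<dots> \<le> 1 / (e - 1)" using e True by (simp add: P_def divide_simps)
    finally show ?thesis .
  qed (use e in auto)
  then show ?thesis by (intro tail_integrable(1)[OF i]) auto
qed

context D begin

definition "Mr = integral {0..} (\<lambda>t. t powr r * f t)"

lemma moment_nn: "t \<ge> 0 \<Longrightarrow> t powr r * f t \<ge> 0"
  using f_pos[of t] by (simp add: less_imp_le)

lemma Mr_nn: "Mr \<ge> 0"
  unfolding Mr_def using moment moment_nn by (intro integral_nonneg) auto

lemma moment_int0: "(\<lambda>t. t powr r * f t) integrable_on {0..y}"
  by (rule integrable_on_subinterval[OF moment]) auto

lemma tk_f_integrable:
  fixes k :: nat assumes k: "real k \<le> r"
  shows "(\<lambda>t. t ^ k * f t) integrable_on {0..}"
proof -
  have fa: "f absolutely_integrable_on {0..y}" for y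
    using f_int0 f_pos by (intro nonnegative_absolutely_integrable_1) (auto simp: less_imp_le)
  have i: "(\<lambda>t. t ^ k * f t) integrable_on {0..y}" for y
  proof -
    have "(\<lambda>t. t ^ k * f t) absolutely_integrable_on {0..y}"
    proof (rule absolutely_integrable_bounded_measurable_product_real)
      show "(\<lambda>t. t ^ k) \<in> borel_measurable (lebesgue_on {0..y})"
        by (intro continuous_imp_measurable_on_sets_lebesgue continuous_intros) auto
      show "bounded ((\<lambda>t::real. t ^ k) ` {0..y})"
        by (intro compact_imp_bounded compact_continuous_image continuous_intros) auto
    qed (use fa in auto)
    then show ?thesis using absolutely_integrable_on_def by blast
  qed
  have le: "t ^ k * f t \<le> f t + t powr r * f t" if "t \<ge> 0" for t
  proof -
    have "t ^ k \<le> 1 + t powr r"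
    proof (cases "t \<le> 1")
      case True
      then have "t ^ k \<le> 1" using that by (simp add: power_le_one)
      moreover have "t powr r \<ge> 0" by simp
      ultimately show ?thesis by linarith
    next
      case False
      then have "t ^ k = t powr real k" using that by (simp add: powr_realpow)
      also have "\<dots> \<le> t powr r" using False k by (intro powr_mono) auto
      finally show ?thesis by simp
    qed
    from mult_right_mono[OF this f_nn[OF that]] show ?thesis by (simp add: distrib_right)
  qed
  have "integral {0..y} (\<lambda>t. t ^ k * f t) \<le> 1 + Mr" for y
  proof -
    have "integral {0..y} (\<lambda>t. t ^ k * f t) \<le> integral {0..y} (\<lambda>t. f t + t powr r * f t)"
      using i f_int0 moment_int0 le by (intro integral_le integrable_add) auto
    also have "\<dots> = integral {0..y} f + integral {0..y} (\<lambda>t. t powr r * f t)"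
      using f_int0 moment_int0 by (rule integral_add)
    also have "integral {0..y} f \<le> 1"
      by (cases "y \<ge> 0") (use F_eq[of y] F_le1[of y] in auto)
    also have "integral {0..y} (\<lambda>t. t powr r * f t) \<le> Mr"
      unfolding Mr_def using moment_int0 moment moment_nn by (intro integral_subset_le) auto
    finally show ?thesis by simp
  qed
  then show ?thesis
    by (intro tail_integrable(1)[OF i]) (simp add: f_nn)
qed

lemma tail_moment: assumes t: "t \<ge> 0" shows "t powr r * s t \<le> Mr"
proof -
  have fi: "f integrable_on {t..}" by (rule tail_split(1)[OF f_integrable _ t]) (simp add: f_nn)
  have mi: "(\<lambda>u. u powr r * f u) integrable_on {t..}" by (rule tail_split(1)[OF moment moment_nn t])
  have "t powr r * s t = integral {t..} (\<lambda>u. t powr r * f u)"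
    using s_tail[OF t] by simp
  also have "\<dots> \<le> integral {t..} (\<lambda>u. u powr r * f u)"
  proof (rule integral_le)
    show "(\<lambda>u. t powr r * f u) integrable_on {t..}" using fi by (rule integrable_on_mult_right)
    fix u assume "u \<in> {t..}"
    then show "t powr r * f u \<le> u powr r * f u"
      using t f_pos[of u] r_gt by (intro mult_right_mono powr_mono2) auto
  qed (use mi in auto)
  also have "\<dots> = Mr - integral {0..t} (\<lambda>u. u powr r * f u)"
    unfolding Mr_def by (rule tail_split(2)[OF moment moment_nn t])
  also have "\<dots> \<le> Mr"
    using integral_nonneg[OF moment_int0[of t]] moment_nn by auto
  finally show ?thesis .
qed

lemma s_majorant:
  assumes t: "t \<ge> 0" and g: "0 < g"
  shows "s t powr g \<le> (2 powr r * (1 + Mr)) powr g * (1 + t) powr (- (r * g))"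
proof -
  have "(1 + t) powr r * s t \<le> 2 powr r * (1 + Mr)"
  proof (cases "t \<le> 1")
    case True
    have a: "(1 + t) powr r \<le> 2 powr r" using True t r_gt by (intro powr_mono2) auto
    have b: "s t \<le> 1" by (rule s_le1)
    have "(1 + t) powr r * s t \<le> 2 powr r * 1"
      by (rule mult_mono[OF a b]) (use s_pos[of t] in \<open>simp_all add: less_imp_le\<close>)
    also have "\<dots> \<le> 2 powr r * (1 + Mr)"
      by (rule mult_left_mono) (use Mr_nn in simp_all)
    finally show ?thesis .
  next
    case False
    have "(1 + t) powr r \<le> (2 * t) powr r" using False t r_gt by (intro powr_mono2) auto
    also have "\<dots> = 2 powr r * t powr r" using t by (simp add: powr_mult)
    finally have "(1 + t) powr r * s t \<le> 2 powr r * (t powr r * s t)"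
      using s_pos[of t] by (simp add: mult_right_mono mult.assoc)
    also have "\<dots> \<le> 2 powr r * Mr" using tail_moment[OF t] by simp
    also have "\<dots> \<le> 2 powr r * (1 + Mr)" by simp
    finally show ?thesis .
  qed
  then have "((1 + t) powr r * s t) powr g \<le> (2 powr r * (1 + Mr)) powr g"
    using s_pos[of t] t g by (intro powr_mono2) auto
  then have "(1 + t) powr (r * g) * s t powr g \<le> (2 powr r * (1 + Mr)) powr g"
    using s_pos[of t] t by (simp add: powr_mult powr_powr)
  moreover have A: "0 < (1 + t) powr (r * g)" using t by simp
  ultimately have "s t powr g \<le> (2 powr r * (1 + Mr)) powr g / (1 + t) powr (r * g)"
    by (simp add: pos_le_divide_eq mult.commute)
  then show ?thesis by (simp add: powr_minus divide_inverse)
qed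

lemma spow_integrable:
  assumes g: "0 < g" and rg: "r * g > 1"
  shows "(\<lambda>t. s t powr g) integrable_on {0..}"
proof (rule dominated_tail)
  show "continuous_on {0..} (\<lambda>t. s t powr g)"
    using s_pos by (intro continuous_intros s_cont) (metis less_irrefl)
  show "(\<lambda>t. (2 powr r * (1 + Mr)) powr g * (1 + t) powr (- (r * g))) integrable_on {0..}"
    using powr_shift_integrable[OF rg] by (rule integrable_on_mult_right)
qed (use s_majorant g in auto)

lemma s_integrable: "s integrable_on {0..}"
  using spow_integrable[of 1] s_pos r_gt by (simp add: less_imp_le)

end


lemma q_in_Qdown:
  fixes g :: real assumes g0: "0 < g" and g1: "g < 1/2"
  shows "(\<lambda>u. (1 - u) powr g) \<in> Qdown"
proof -
  have cont: "continuous_on {0..1} (\<lambda>u::real. (1 - u) powr g)"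
    using g0 by (intro continuous_on_powr' continuous_intros) auto
  have anti: "antimono_on {0..1} (\<lambda>u::real. (1 - u) powr g)"
    unfolding monotone_on_def using g0 by (auto intro!: powr_mono2)
  define k where "k u = indicator {0..1} u * u powr (- (2 * g))" for u :: real
  have hk: "(\<lambda>u. u powr (- (2 * g))) integrable_on {0..1}"
    using g1 by (intro integrable_on_powr_from_0) auto
  have "integrable lebesgue k"
    unfolding k_def
    using nonnegative_absolutely_integrable_1[OF hk] by (simp add: set_integrable_def)
  moreover have "k \<in> borel_measurable lborel"
    unfolding k_def by measurable
  ultimately have "integrable lborel k"
    using integrable_completion by blast
  then have ik: "integrable lborel (\<lambda>t. k (1 + (-1) * t))"
    by (subst lborel_integrable_real_affine_iff) auto
  have fin: "(\<integral>\<^sup>+ t. ennreal (k (1 + (-1) * t)) \<partial>lborel) < \<infinity>"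
  proof -
    have "(\<integral>\<^sup>+ t. ennreal (norm (k (1 + (-1) * t))) \<partial>lborel) < \<infinity>"
      using ik by (simp add: integrable_iff_bounded)
    moreover have "norm (k (1 + (-1) * t)) = k (1 + (-1) * t)" for t
      by (simp add: k_def)
    ultimately show ?thesis by simp
  qed
  have ae: "AE t in lborel. indicator {0..1} t * inverse (ennreal (((1 - t) powr g)\<^sup>2))
      = ennreal (k (1 + (-1) * t))"
    using AE_lborel_singleton[of 1]
  proof eventually_elim
    case (elim t)
    show ?case
    proof (cases "t \<in> {0..1}")
      case True
      with elim have t: "0 \<le> t" "t < 1" by auto
      have "((1 - t) powr g)\<^sup>2 = (1 - t) powr (2 * g)"
        using t by (simp add: power2_eq_square powr_add[symmetric])
      moreover have "inverse ((1 - t) powr (2 * g)) = (1 - t) powr (- (2 * g))"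
        by (simp add: powr_minus)
      moreover have "(1 - t) powr (2 * g) > 0" using t by simp
      ultimately show ?thesis using True t
        by (simp add: k_def inverse_ennreal indicator_def)
    next
      case False
      then have "1 + (-1) * t \<notin> {0..1}" by auto
      then show ?thesis using False by (simp only: k_def indicator_simps) simp
    qed
  qed
  have "(\<integral>\<^sup>+ t. indicator {0..1} t * inverse (ennreal (((1 - t) powr g)\<^sup>2)) \<partial>lborel) < \<infinity>"
    using nn_integral_cong_AE[OF ae] fin by simp
  then show ?thesis unfolding Qdown_def using cont anti by auto
qed


context D begin

lemma s_integrable_from: "x \<ge> 0 \<Longrightarrow> s integrable_on {x..}"
  by (rule tail_split(1)[OF s_integrable _]) (use s_pos in \<open>auto simp: less_imp_le\<close>)

lemma s_int_interval: "s integrable_on {x..y}"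
  by (rule integrable_continuous_interval[OF s_cont])

lemma G_le_bound:
  assumes x: "x \<ge> 0" and bd: "\<And>T. T \<ge> x \<Longrightarrow> integral {x..T} s \<le> B"
  shows "integral {x..} s \<le> B"
proof -
  have i: "s integrable_on {x..y}" for y by (rule s_int_interval)
  have nn: "t \<ge> x \<Longrightarrow> 0 \<le> s t" for t using s_pos[of t] by simp
  have bd': "integral {x..y} s \<le> max B 0" for y
    by (cases "y \<ge> x") (use bd in \<open>force\<close>, simp)
  have l: "((\<lambda>y. integral {x..y} s) \<longlongrightarrow> integral {x..} s) at_top"
    by (rule tail_integrable(2)[OF i nn bd'])
  have "eventually (\<lambda>T. integral {x..T} s \<le> B) at_top"
    using eventually_ge_at_top[of x] by (rule eventually_mono) (rule bd)
  then show ?thesis by (rule tendsto_upperbound[OF l]) simp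
qed

lemma part_b:
  assumes g1: "1 / r < g" and g2: "g < 1 / 2"
    and ls: "Limsup at_top (\<lambda>x::real. ereal (survival F x powr (1 + g) / f x)) < \<infinity>"
  shows "\<exists>q\<in>Qdown. (\<lambda>t. q (F t)) integrable_on {0..} \<and> (\<exists>M. \<forall>x\<ge>0. mrl F x * q (F x) \<le> M)"
proof -
  have r0: "r > 0" using r_gt by simp
  have g0: "g > 0" using g1 r0 by (smt (verit) divide_pos_pos)
  have rg: "r * g > 1" using g1 r0 by (simp add: field_simps)
  define q where "q u = (1 - u) powr g" for u :: real
  have qF: "q (F t) = s t powr g" for t by (simp add: q_def survival_def)
  have qQ: "q \<in> Qdown" unfolding q_def by (rule q_in_Qdown[OF g0 g2])
  have qint: "(\<lambda>t. q (F t)) integrable_on {0..}"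
    unfolding qF using spow_integrable[OF g0 rg] .
  obtain C0 :: real where "Limsup at_top (\<lambda>x::real. ereal (s x powr (1 + g) / f x)) < ereal C0"
  proof (cases "Limsup at_top (\<lambda>x::real. ereal (s x powr (1 + g) / f x))")
    case (real r)
    then show ?thesis using that[of "r + 1"] by simp
  qed (use ls that[of 0] in auto)
  then have "eventually (\<lambda>x. ereal (s x powr (1 + g) / f x) < ereal C0) at_top"
    by (rule Limsup_lessD)
  then obtain X0 where X0: "\<And>x. x \<ge> X0 \<Longrightarrow> s x powr (1 + g) / f x < C0"
    by (auto simp: eventually_at_top_linorder)
  define X where "X = max X0 0"
  define C where "C = max C0 1"
  have C0': "C > 0" by (simp add: C_def)
  have X0': "X \<ge> 0" by (simp add: X_def)
  have fbound: "s t powr (1 + g) \<le> C * f t" if "t \<ge> X" for t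
  proof -
    have "t \<ge> X0" "t \<ge> 0" using that by (auto simp: X_def)
    then have "s t powr (1 + g) / f t < C0" using X0 by blast
    then have "s t powr (1 + g) / f t \<le> C" by (simp add: C_def)
    then show ?thesis using f_pos[OF \<open>t \<ge> 0\<close>] by (simp add: pos_divide_le_eq mult.commute)
  qed
  define A where "A = C * 2 powr (1 + g)"
  have step: "integral {x..y} s \<le> A * s x powr (1 - g)"
    if x: "x \<ge> X" and xy: "x \<le> y" and sy: "s y \<ge> s x / 2" for x y
  proof -
    define u where "u = s x"
    have u: "u > 0" using s_pos by (simp add: u_def)
    have "(y - x) * (s y powr (1 + g) / C) \<le> integral {x..y} f"
    proof -
      have "integral {x..y} (\<lambda>t. s y powr (1 + g) / C) \<le> integral {x..y} f"
      proof (rule integral_le)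
        show "f integrable_on {x..y}" by (rule f_int) (use x X0' in auto)
        fix t assume t: "t \<in> {x..y}"
        have "s y powr (1 + g) \<le> s t powr (1 + g)"
          using t s_antimono[of t y] s_pos[of y] g0 by (intro powr_mono2) auto
        also have "\<dots> \<le> C * f t" using fbound[of t] t x by auto
        finally show "s y powr (1 + g) / C \<le> f t" using C0' by (simp add: divide_le_eq mult.commute)
      qed auto
      then show ?thesis using xy by simp
    qed
    also have "integral {x..y} f = s x - s y"
      using F_diff[of x y] x X0' xy by (simp add: survival_def)
    also have "\<dots> \<le> u" using s_pos[of y] by (simp add: u_def)
    finally have a: "(y - x) * (s y powr (1 + g) / C) \<le> u" .
    have "(u / 2) powr (1 + g) \<le> s y powr (1 + g)"
      using sy u g0 by (intro powr_mono2) (auto simp: u_def)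
    then have "(y - x) * ((u / 2) powr (1 + g) / C) \<le> (y - x) * (s y powr (1 + g) / C)"
      using xy C0' by (intro mult_left_mono divide_right_mono) auto
    with a have b: "(y - x) * ((u / 2) powr (1 + g) / C) \<le> u" by simp
    have pos: "(u / 2) powr (1 + g) / C > 0" using u C0' by simp
    have yx: "y - x \<le> u / ((u / 2) powr (1 + g) / C)"
      using b pos by (simp only: pos_le_divide_eq)
    have "integral {x..y} s \<le> integral {x..y} (\<lambda>t. u)"
      by (rule integral_le[OF s_int_interval]) (auto simp: u_def intro: s_antimono)
    also have "\<dots> = (y - x) * u" using xy by simp
    also have "\<dots> \<le> u / ((u / 2) powr (1 + g) / C) * u"
      using yx u by (intro mult_right_mono) auto
    also have "u / ((u / 2) powr (1 + g) / C) * u = A * u powr (1 - g)"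
    proof -
      have "(u / 2) powr (1 + g) = u powr (1 + g) / 2 powr (1 + g)"
        using u by (simp add: powr_divide)
      moreover have "u * u = u powr (1 + g) * u powr (1 - g)"
      proof -
        have "u powr (1 + g) * u powr (1 - g) = u powr ((1 + g) + (1 - g))"
          by (rule powr_add[symmetric])
        also have "(1 + g) + (1 - g) = 1 + 1" by simp
        also have "u powr (1 + 1) = u powr 1 * u powr 1" by (rule powr_add)
        also have "\<dots> = u * u" using u by simp
        finally show ?thesis by simp
      qed
      ultimately show ?thesis using u C0'
        by (simp add: A_def field_simps)
    qed
    finally show ?thesis by (simp add: u_def)
  qed
  define \<rho> where "\<rho> = 1 / 2 powr (1 - g)"
  have "1 < (2::real) powr (1 - g)" using g2 by (intro gr_one_powr) auto
  then have \<rho>1: "\<rho> < 1" "\<rho> > 0" by (auto simp: \<rho>_def)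
  define B where "B = A / (1 - \<rho>)"
  have A0: "A > 0" using C0' by (simp add: A_def)
  have AB: "A \<le> B" using \<rho>1 A0 by (simp add: B_def field_simps)
  have Beq: "A + B * \<rho> = B" using \<rho>1 by (simp add: B_def field_simps)
  have ind: "\<forall>x T. x \<ge> X \<longrightarrow> x \<le> T \<longrightarrow> s T \<ge> s x / 2 ^ n \<longrightarrow> integral {x..T} s \<le> B * s x powr (1 - g)" for n
  proof (induction n)
    case 0
    show ?case
    proof (intro allI impI)
      fix x T assume "x \<ge> X" "x \<le> T" "s T \<ge> s x / 2 ^ 0"
      then have "integral {x..T} s \<le> A * s x powr (1 - g)"
        using s_pos[of x] by (intro step) auto
      also have "\<dots> \<le> B * s x powr (1 - g)" using AB by (intro mult_right_mono) auto
      finally show "integral {x..T} s \<le> B * s x powr (1 - g)" .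
    qed
  next
    case (Suc n)
    show ?case
    proof (intro allI impI)
      fix x T assume x: "x \<ge> X" and xT: "x \<le> T" and sT: "s T \<ge> s x / 2 ^ Suc n"
      show "integral {x..T} s \<le> B * s x powr (1 - g)"
      proof (cases "s T \<ge> s x / 2")
        case True
        then have "integral {x..T} s \<le> A * s x powr (1 - g)" using x xT by (intro step) auto
        also have "\<dots> \<le> B * s x powr (1 - g)" using AB by (intro mult_right_mono) auto
        finally show ?thesis .
      next
        case False
        then obtain y where y: "x \<le> y" "y \<le> T" "s y = s x / 2"
          using IVT2'[of s T "s x / 2" x, OF _ _ xT s_cont] s_pos[of x] by force
        have "integral {x..T} s = integral {x..y} s + integral {y..T} s"
          using Henstock_Kurzweil_Integration.integral_combine[where a=x and c=y and b=T and f=s] y s_int_interval by simp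
        also have "integral {x..y} s \<le> A * s x powr (1 - g)"
          using x y by (intro step) auto
        also have "integral {y..T} s \<le> B * s y powr (1 - g)"
        proof -
          have "s y / 2 ^ n = s x / 2 ^ Suc n" unfolding y(3) by (simp add: field_simps)
          then have sTy: "s T \<ge> s y / 2 ^ n" using sT by simp
          have "X \<le> y" using x y by simp
          from Suc.IH[rule_format, OF this y(2) sTy] show ?thesis .
        qed
        also have "s y powr (1 - g) = \<rho> * s x powr (1 - g)"
          unfolding y(3) using s_pos[of x] by (simp add: \<rho>_def powr_divide)
        finally have "integral {x..T} s \<le> (A + B * \<rho>) * s x powr (1 - g)"
          by (simp add: algebra_simps)
        then show ?thesis using Beq by simp
      qed
    qed
  qed
  have Gbound: "integral {x..} s \<le> B * s x powr (1 - g)" if x: "x \<ge> X" for x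
  proof (rule G_le_bound)
    show "x \<ge> 0" using x X0' by simp
    fix T assume xT: "T \<ge> x"
    obtain n where n: "s x / s T < 2 ^ n"
      using real_arch_pow[of 2 "s x / s T"] by auto
    then have "s T \<ge> s x / 2 ^ n"
      using s_pos[of T] by (simp add: divide_le_eq field_simps)
    then show "integral {x..T} s \<le> B * s x powr (1 - g)" using ind[of n] x xT by auto
  qed
  have G0: "integral {x..} s \<le> integral {0..} s" if "x \<ge> 0" for x
    using s_integrable_from[OF that] s_integrable s_pos that by (intro integral_subset_le) (auto simp: less_imp_le)
  define M where "M = max B (integral {0..} s * s X powr (g - 1))"
  have "mrl F x * q (F x) \<le> M" if x: "x \<ge> 0" for x
  proof -
    have eq: "mrl F x * q (F x) = integral {x..} s * s x powr (g - 1)"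
      using s_pos[of x] by (simp add: mrl_def qF powr_diff divide_simps)
    show ?thesis
    proof (cases "x \<ge> X")
      case True
      have "integral {x..} s * s x powr (g - 1) \<le> B * s x powr (1 - g) * s x powr (g - 1)"
        using Gbound[OF True] by (intro mult_right_mono) auto
      also have "\<dots> = B" using s_pos[of x] by (simp add: mult.assoc powr_add[symmetric])
      finally show ?thesis using eq by (simp add: M_def)
    next
      case False
      have "integral {x..} s * s x powr (g - 1) \<le> integral {0..} s * s X powr (g - 1)"
      proof (rule mult_mono)
        show "integral {x..} s \<le> integral {0..} s" by (rule G0[OF x])
        show "s x powr (g - 1) \<le> s X powr (g - 1)"
          using False g2 s_pos[of X] s_antimono[of x X] by (intro powr_mono2') auto
        show "0 \<le> integral {0..} s"
          using s_integrable s_pos by (intro integral_nonneg) (auto simp: less_imp_le)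
      qed simp
      then show ?thesis using eq by (simp add: M_def)
    qed
  qed
  then show ?thesis using qQ qint by blast
qed

end


locale DA = D +
  fixes x0 c :: real and g' :: "real \<Rightarrow> real"
  assumes hd: "\<forall>x\<ge>x0. ((\<lambda>y. survival F y / f y) has_real_derivative g' x) (at x within {x0..})"
    and glim: "(g' \<longlongrightarrow> c) at_top"
begin

definition h where "h y = s y / f y"
definition "b0 = max x0 0"

lemma b0: "b0 \<ge> 0" "b0 \<ge> x0" by (auto simp: b0_def)

lemma h_deriv: assumes x: "x > b0" shows "(h has_real_derivative g' x) (at x)"
proof -
  have "x \<ge> x0" using x b0 by simp
  then have "(h has_real_derivative g' x) (at x within {x0..})"
    using hd unfolding h_def by blast
  moreover have "at x within {x0..} = at x"
    using x b0 by (intro at_within_interior) auto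
  ultimately show ?thesis by simp
qed

lemma h_pos: "x \<ge> 0 \<Longrightarrow> h x > 0"
  using s_pos[of x] f_pos[of x] by (simp add: h_def)

lemma hf: "x \<ge> 0 \<Longrightarrow> h x * f x = s x"
  using f_pos[of x] by (simp add: h_def)

lemma h_isCont: "x > b0 \<Longrightarrow> isCont h x"
  using h_deriv DERIV_isCont by blast

lemma s_isCont: "isCont s x"
  using s_cont[of UNIV] by (simp add: continuous_on_eq_continuous_at)

lemma f_isCont: assumes x: "x > b0" shows "isCont f x"
proof -
  have "isCont (\<lambda>y. s y / h y) x"
    using h_isCont[OF x] s_isCont h_pos[of x] x b0 by (intro isCont_divide) auto
  moreover have "eventually (\<lambda>y. f y = s y / h y) (nhds x)"
  proof -
    have "eventually (\<lambda>y. y \<in> {b0<..}) (nhds x)"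
      using x by (intro eventually_nhds_in_open) auto
    then show ?thesis
    proof eventually_elim
      case (elim y)
      then have "y \<ge> 0" using b0 by simp
      then show ?case using hf[of y] h_pos[of y] by (simp add: field_simps)
    qed
  qed
  ultimately show ?thesis using isCont_cong[of f "\<lambda>y. s y / h y" x] by blast
qed

lemma tail_deriv0:
  assumes int: "\<phi> integrable_on {0..}" and nn: "\<And>t. t \<ge> 0 \<Longrightarrow> \<phi> t \<ge> 0"
    and cont: "\<And>y. y > b0 \<Longrightarrow> isCont \<phi> y" and x: "x > b0"
  shows "((\<lambda>y. integral {y..} \<phi>) has_real_derivative - \<phi> x) (at x)"
proof -
  define a where "a = (b0 + x) / 2"
  have a: "b0 < a" "a < x" "a \<ge> 0" using x b0 by (auto simp: a_def)
  have ia: "\<phi> integrable_on {a..}" by (rule tail_split(1)[OF int nn a(3)])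
  have ca: "continuous_on {a..x+1} \<phi>"
    using a cont by (intro continuous_at_imp_continuous_on) auto
  show ?thesis
    by (rule tail_deriv[OF ia _ a(2) ca]) (use a nn in auto)
qed

lemma s_deriv: assumes x: "x > b0" shows "(s has_real_derivative - f x) (at x)"
proof -
  have "((\<lambda>y. integral {y..} f) has_real_derivative - f x) (at x)"
    by (rule tail_deriv0[OF f_integrable f_nn f_isCont x])
  then show ?thesis
  proof (rule has_field_derivative_transform_within_open[where S="{0<..}"])
    fix y :: real assume "y \<in> {0<..}"
    then show "integral {y..} f = s y" using s_tail[of y] by simp
  qed (use x b0 in auto)
qed

lemma spow_deriv: assumes x: "x > b0"
  shows "((\<lambda>y. s y powr g) has_real_derivative g * s x powr (g - 1) * (- f x)) (at x)"
  using DERIV_chain2[OF has_real_derivative_powr[OF s_pos[of x]] s_deriv[OF x]] by simp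

end


context D begin

lemma tpow_s: assumes k: "0 \<le> k" "k < r" shows "((\<lambda>t. t powr k * s t) \<longlongrightarrow> 0) at_top"
proof (rule tendsto_sandwich[where f="\<lambda>_. 0" and h="\<lambda>t. Mr * t powr (k - r)"])
  show "eventually (\<lambda>t. 0 \<le> t powr k * s t) at_top"
    using s_pos by (intro always_eventually) (simp add: less_imp_le)
  show "eventually (\<lambda>t. t powr k * s t \<le> Mr * t powr (k - r)) at_top"
    using eventually_gt_at_top[of 0]
  proof eventually_elim
    case (elim t)
    have "t powr r * s t \<le> Mr" using tail_moment[of t] elim by simp
    then have "s t \<le> Mr / t powr r" using elim by (simp add: pos_le_divide_eq mult.commute)
    then have "t powr k * s t \<le> t powr k * (Mr / t powr r)"
      by (intro mult_left_mono) auto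
    also have "\<dots> = Mr * t powr (k - r)" using elim by (simp add: powr_diff)
    finally show ?case .
  qed
  have "((\<lambda>t. t powr (k - r)) \<longlongrightarrow> 0) at_top"
    using k by (intro tendsto_neg_powr filterlim_ident) auto
  then show "((\<lambda>t. Mr * t powr (k - r)) \<longlongrightarrow> 0) at_top"
    using tendsto_mult_right_zero by blast
qed auto

lemma t_s_lim: "((\<lambda>t. t * s t) \<longlongrightarrow> 0) at_top"
proof -
  have "((\<lambda>t. t powr 1 * s t) \<longlongrightarrow> 0) at_top" using r_gt by (intro tpow_s) auto
  then show ?thesis
    by (rule Lim_transform_eventually) (rule eventually_mono[OF eventually_gt_at_top[of 0]], simp)
qed

lemma t2_s_lim: "((\<lambda>t. t\<^sup>2 * s t) \<longlongrightarrow> 0) at_top"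
proof -
  have "((\<lambda>t. t powr 2 * s t) \<longlongrightarrow> 0) at_top" using r_gt by (intro tpow_s) auto
  then show ?thesis
    by (rule Lim_transform_eventually) (rule eventually_mono[OF eventually_gt_at_top[of 0]], simp add: powr_realpow)
qed

end

context DA begin

lemma h_linear_bound:
  assumes ev: "\<And>t. t \<ge> T \<Longrightarrow> g' t \<le> L" and T: "T > b0" and that: "t \<ge> T"
  shows "h t \<le> h T + L * (t - T)"
proof (cases "t = T")
  case False
  then have "T < t" using that by simp
  from MVT2[OF this, of h g'] h_deriv T
  obtain z where z: "T < z" "z < t" "h t - h T = (t - T) * g' z" by force
  have "(t - T) * g' z \<le> (t - T) * L" using ev[of z] z by (intro mult_left_mono) auto
  moreover have "h t = h T + (t - T) * g' z" using z(3) by simp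
  ultimately show ?thesis by (simp add: mult.commute)
qed simp

lemma h_linear_lower:
  assumes ev: "\<And>t. t \<ge> T \<Longrightarrow> g' t \<ge> L" and T: "T > b0" and that: "t \<ge> T"
  shows "h t \<ge> h T + L * (t - T)"
proof (cases "t = T")
  case False
  then have "T < t" using that by simp
  from MVT2[OF this, of h g'] h_deriv T
  obtain z where z: "T < z" "z < t" "h t - h T = (t - T) * g' z" by force
  have "(t - T) * L \<le> (t - T) * g' z" using ev[of z] z by (intro mult_left_mono) auto
  moreover have "h t = h T + (t - T) * g' z" using z(3) by simp
  ultimately show ?thesis by (simp add: mult.commute)
qed simp

lemma ev_g'_le: assumes "c < L" obtains T where "T > b0" "\<And>t. t \<ge> T \<Longrightarrow> g' t \<le> L"
proof -
  have "eventually (\<lambda>t. g' t < L) at_top" using order_tendstoD(2)[OF glim assms] .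
  then obtain T0 where T0: "\<And>t. t \<ge> T0 \<Longrightarrow> g' t < L" by (auto simp: eventually_at_top_linorder)
  show ?thesis by (rule that[of "max T0 (b0 + 1)"]) (use T0 in \<open>auto simp: less_imp_le\<close>)
qed

lemma ev_g'_ge: assumes "L < c" obtains T where "T > b0" "\<And>t. t \<ge> T \<Longrightarrow> g' t \<ge> L"
proof -
  have "eventually (\<lambda>t. g' t > L) at_top" using order_tendstoD(1)[OF glim assms] .
  then obtain T0 where T0: "\<And>t. t \<ge> T0 \<Longrightarrow> g' t > L" by (auto simp: eventually_at_top_linorder)
  show ?thesis by (rule that[of "max T0 (b0 + 1)"]) (use T0 in \<open>auto simp: less_imp_le\<close>)
qed

lemma c_nonneg: "c \<ge> 0"
proof (rule ccontr)
  assume "\<not> c \<ge> 0"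
  then have c: "c < 0" by simp
  then have "c < c / 2" by simp
  then obtain T where T: "T > b0" "\<And>t. t \<ge> T \<Longrightarrow> g' t \<le> c / 2" using ev_g'_le by blast
  define t where "t = T - 2 * h T / c + 1"
  have hT: "h T > 0" using T b0 by (intro h_pos) auto
  have tT: "t \<ge> T" using hT c by (simp add: t_def field_simps)
  have "h t \<le> h T + c / 2 * (t - T)" by (rule h_linear_bound[OF T(2) T(1) tT])
  also have "\<dots> = c / 2" using c by (simp add: t_def field_simps)
  finally have "h t < 0" using c by simp
  moreover have "h t > 0" using tT T b0 by (intro h_pos) auto
  ultimately show False by simp
qed

lemma c_le: "c \<le> 1 / r"
proof (rule ccontr)
  assume "\<not> c \<le> 1 / r"
  then have c: "c > 1 / r" by simp
  have r0: "r > 0" using r_gt by simp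
  define c' where "c' = (c + 1 / r) / 2"
  have a: "1 / r > 0" using r0 by simp
  have gen: "\<And>u::real. u < c \<Longrightarrow> 0 < u \<Longrightarrow> u < (c + u) / 2 \<and> (c + u) / 2 < c \<and> (c + u) / 2 > 0"
    by auto
  have c'1: "1 / r < c'" unfolding c'_def using gen[OF c a] by blast
  have c'2: "c' < c" unfolding c'_def using gen[OF c a] by blast
  have c'3: "c' > 0" unfolding c'_def using gen[OF c a] by blast
  note c' = c'1 c'2 c'3
  obtain T where T: "T > b0" "\<And>t. t \<ge> T \<Longrightarrow> g' t \<ge> c'" using ev_g'_ge[OF c'(2)] by blast
  have hT: "h T > 0" using T b0 by (intro h_pos) auto
  define Y where "Y = T - h T / c'"
  have YT: "Y < T" using hT c' by (simp add: Y_def)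
  have hlow: "h t \<ge> c' * (t - Y)" if "t \<ge> T" for t
  proof -
    have "h t \<ge> h T + c' * (t - T)" by (rule h_linear_lower[OF T(2) T(1) that])
    also have "h T + c' * (t - T) = c' * (t - Y)" using c' by (simp add: Y_def field_simps)
    finally show ?thesis .
  qed
  define p where "p = 1 / c'"
  have p: "p > 0" "p < r" using c' r0 by (auto simp: p_def field_simps)
  define \<psi> where "\<psi> t = s t * (t - Y) powr p" for t
  have dpsi: "(\<psi> has_real_derivative (- f t) * (t - Y) powr p + s t * (p * (t - Y) powr (p - 1) * 1)) (at t)"
    if t: "t \<ge> T" for t
  proof -
    have "((\<lambda>t. t - Y) has_real_derivative 1) (at t)" by (auto intro!: derivative_eq_intros)
    from DERIV_chain2[OF has_real_derivative_powr[of "t - Y" p] this]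
    have dp: "((\<lambda>t. (t - Y) powr p) has_real_derivative p * (t - Y) powr (p - 1) * 1) (at t)"
      using t YT by simp
    have pe: "\<psi> = (\<lambda>t. s t * (t - Y) powr p)" by (simp add: fun_eq_iff \<psi>_def)
    from DERIV_mult[OF s_deriv dp] t T show ?thesis unfolding pe by (simp add: algebra_simps)
  qed
  have dpos: "(- f t) * (t - Y) powr p + s t * (p * (t - Y) powr (p - 1) * 1) \<ge> 0"
    if t: "t \<ge> T" for t
  proof -
    have t0: "t \<ge> 0" "t - Y > 0" using t T b0 YT by auto
    have eq1: "(t - Y) powr p = (t - Y) powr (p - 1) * (t - Y)"
      using t0 by (simp add: powr_diff)
    have eq2: "s t = h t * f t" using hf[OF t0(1)] by simp
    have "(- f t) * (t - Y) powr p + s t * (p * (t - Y) powr (p - 1) * 1)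
        = (t - Y) powr (p - 1) * f t * (p * h t - (t - Y))"
      unfolding eq1 eq2 by (simp add: algebra_simps)
    moreover have "p * h t - (t - Y) \<ge> 0"
    proof -
      have "p * h t \<ge> p * (c' * (t - Y))" using hlow[OF t] p by (intro mult_left_mono) auto
      also have "p * (c' * (t - Y)) = t - Y" using c' by (simp add: p_def)
      finally show ?thesis by simp
    qed
    moreover have "f t > 0" using f_pos t0 by simp
    ultimately show ?thesis by simp
  qed
  have psi_mono: "\<psi> T \<le> \<psi> t" if t: "t \<ge> T" for t
  proof (rule DERIV_nonneg_imp_increasing_open[OF t])
    fix x assume "T < x" "x < t"
    then have "T \<le> x" by simp
    from dpsi[OF this] dpos[OF this]
    show "\<exists>y. (\<psi> has_real_derivative y) (at x) \<and> 0 \<le> y" by blast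
  next
    show "continuous_on {T..t} \<psi>"
      using dpsi by (intro continuous_at_imp_continuous_on) (meson DERIV_isCont atLeastAtMost_iff)
  qed
  define K where "K = \<psi> T"
  have K: "K > 0" using s_pos[of T] YT by (simp add: K_def \<psi>_def)
  define k where "k = (p + r) / 2"
  have k: "p < k" "k < r" "0 \<le> k" using p by (auto simp: k_def)
  have ev1: "eventually (\<lambda>t. t powr k * s t < K / 2 powr p) at_top"
    using order_tendstoD(2)[OF tpow_s[OF k(3) k(2)]] K by simp
  have ev2: "eventually (\<lambda>t. K / 2 powr p \<le> t powr k * s t) at_top"
    using eventually_ge_at_top[of "max T (max 1 \<bar>Y\<bar>)"]
  proof eventually_elim
    case (elim t)
    have t: "t \<ge> T" "t \<ge> 1" "t \<ge> \<bar>Y\<bar>" using elim by auto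
    have tY: "t - Y > 0" using t YT by simp
    have "(t - Y) powr p \<le> (2 * t) powr p" using tY t p by (intro powr_mono2) auto
    also have "\<dots> = 2 powr p * t powr p" using t by (simp add: powr_mult)
    also have "\<dots> \<le> 2 powr p * t powr k" using t k by (intro mult_left_mono powr_mono) auto
    finally have a: "(t - Y) powr p \<le> 2 powr p * t powr k" .
    have "K \<le> \<psi> t" unfolding K_def by (rule psi_mono[OF t(1)])
    also have "\<dots> = s t * (t - Y) powr p" by (simp add: \<psi>_def)
    also have "\<dots> \<le> s t * (2 powr p * t powr k)" using a s_pos[of t] by (intro mult_left_mono) auto
    finally show ?case by (simp add: divide_le_eq algebra_simps)
  qed
  from eventually_conj[OF ev1 ev2] obtain N where
    N: "\<And>t. t \<ge> N \<Longrightarrow> t powr k * s t < K / 2 powr p \<and> K / 2 powr p \<le> t powr k * s t"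
    by (auto simp: eventually_at_top_linorder)
  from N[of N] show False by linarith
qed

lemma c_lt_half: "c < 1 / 2"
  using c_le r_gt by (smt (verit) frac_less2)

end


lemma deriv_zero_limit_zero:
  fixes D :: "real \<Rightarrow> real"
  assumes d: "\<And>y. y > b \<Longrightarrow> (D has_real_derivative 0) (at y)"
    and lim: "(D \<longlongrightarrow> 0) at_top" and x: "x > b"
  shows "D x = 0"
proof -
  have eq: "D y = D x" if y: "y \<ge> x" for y
  proof (cases "x < y")
    case True
    show ?thesis
    proof (rule DERIV_isconst2[OF True])
      show "continuous_on {x..y} D"
      proof (intro continuous_at_imp_continuous_on ballI)
        fix z assume "z \<in> {x..y}"
        then have "z > b" using x by simp
        from DERIV_isCont[OF d[OF this]] show "isCont D z" .
      qed
    qed (use d x y in auto)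
  qed (use y in auto)
  have ev: "eventually (\<lambda>y. D y = D x) at_top"
    by (rule eventually_mono[OF eventually_ge_at_top[of x]]) (rule eq)
  have "((\<lambda>y::real. D x) \<longlongrightarrow> 0) at_top"
    using Lim_transform_eventually[OF lim ev] by simp
  from tendsto_unique[OF trivial_limit_at_top_linorder tendsto_const this] show ?thesis .
qed

context DA begin

definition "G x = integral {x..} s"
definition "m1 x = integral {x..} (\<lambda>t. t * f t)"
definition "m2 x = integral {x..} (\<lambda>t. t\<^sup>2 * f t)"
definition "\<Phi> x = integral {x..} (\<lambda>t. (t - x)\<^sup>2 * f t)"

lemma tf_int: "(\<lambda>t. t * f t) integrable_on {0..}"
  using tk_f_integrable[of 1] r_gt by simp

lemma t2f_int: "(\<lambda>t. t\<^sup>2 * f t) integrable_on {0..}"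
  using tk_f_integrable[of 2] r_gt by simp

lemma tf_nn: "t \<ge> 0 \<Longrightarrow> t * f t \<ge> 0" using f_nn by simp
lemma t2f_nn: "t \<ge> 0 \<Longrightarrow> t\<^sup>2 * f t \<ge> 0" using f_nn by simp
lemma s_nn: "s t \<ge> 0" using s_pos[of t] by simp

lemma G_deriv: "x > b0 \<Longrightarrow> (G has_real_derivative - s x) (at x)"
  unfolding G_def by (rule tail_deriv0[OF s_integrable]) (auto simp: s_nn s_isCont)

lemma m1_deriv: "x > b0 \<Longrightarrow> (m1 has_real_derivative - (x * f x)) (at x)"
  unfolding m1_def
  by (rule tail_deriv0[OF tf_int]) (auto simp: tf_nn intro!: continuous_intros f_isCont)

lemma m2_deriv: "x > b0 \<Longrightarrow> (m2 has_real_derivative - (x\<^sup>2 * f x)) (at x)"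
  unfolding m2_def
  by (rule tail_deriv0[OF t2f_int]) (auto simp: t2f_nn intro!: continuous_intros f_isCont)

lemma G_lim: "(G \<longlongrightarrow> 0) at_top"
  unfolding G_def by (rule tail_tendsto0[OF s_integrable]) (simp add: s_nn)
lemma m1_lim: "(m1 \<longlongrightarrow> 0) at_top"
  unfolding m1_def by (rule tail_tendsto0[OF tf_int]) (simp add: tf_nn)
lemma m2_lim: "(m2 \<longlongrightarrow> 0) at_top"
  unfolding m2_def by (rule tail_tendsto0[OF t2f_int]) (simp add: t2f_nn)

lemma G_eq: assumes x: "x > b0" shows "G x = m1 x - x * s x"
proof -
  define D where "D y = m1 y - y * s y - G y" for y
  have "(D has_real_derivative 0) (at y)" if y: "y > b0" for y
  proof -
    have "(D has_real_derivative (- (y * f y)) - (1 * s y + (- f y) * y) - (- s y)) (at y)"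
      unfolding D_def
      by (intro DERIV_diff m1_deriv G_deriv DERIV_mult DERIV_ident s_deriv y)
    then show ?thesis by (simp add: algebra_simps)
  qed
  moreover have "(D \<longlongrightarrow> 0) at_top"
  proof -
    have "((\<lambda>y. m1 y - y * s y - G y) \<longlongrightarrow> 0 - 0 - 0) at_top"
      by (intro tendsto_diff m1_lim t_s_lim G_lim)
    then show ?thesis by (simp add: D_def[abs_def])
  qed
  ultimately have "D x = 0" using deriv_zero_limit_zero x by blast
  then show ?thesis by (simp add: D_def)
qed

lemma Phi_int_parts: assumes x: "x \<ge> 0"
  shows "(\<lambda>t. t\<^sup>2 * f t) integrable_on {x..}" "(\<lambda>t. t * f t) integrable_on {x..}" "f integrable_on {x..}"
    "(\<lambda>t. (t - x)\<^sup>2 * f t) = (\<lambda>t. (t\<^sup>2 * f t - (2 * x) * (t * f t)) + x\<^sup>2 * f t)"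
proof -
  show i2: "(\<lambda>t. t\<^sup>2 * f t) integrable_on {x..}" by (rule tail_split(1)[OF t2f_int t2f_nn x])
  show i1: "(\<lambda>t. t * f t) integrable_on {x..}" by (rule tail_split(1)[OF tf_int tf_nn x])
  show i0: "f integrable_on {x..}" by (rule tail_split(1)[OF f_integrable f_nn x])
  show "(\<lambda>t. (t - x)\<^sup>2 * f t) = (\<lambda>t. (t\<^sup>2 * f t - (2 * x) * (t * f t)) + x\<^sup>2 * f t)"
    by (auto simp: fun_eq_iff power2_eq_square algebra_simps)
qed

lemma Phi_int: assumes x: "x \<ge> 0" shows "(\<lambda>t. (t - x)\<^sup>2 * f t) integrable_on {x..}"
  unfolding Phi_int_parts(4)[OF x]
  by (intro integrable_add integrable_diff integrable_on_mult_right Phi_int_parts[OF x])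

lemma Phi_eq: assumes x: "x \<ge> 0" shows "\<Phi> x = m2 x - 2 * x * m1 x + x\<^sup>2 * s x"
proof -
  note i = Phi_int_parts[OF x]
  have "\<Phi> x = integral {x..} (\<lambda>t. t\<^sup>2 * f t - (2 * x) * (t * f t)) + integral {x..} (\<lambda>t. x\<^sup>2 * f t)"
    unfolding \<Phi>_def i(4)
    by (intro integral_add integrable_diff integrable_on_mult_right i(1-3))
  also have "integral {x..} (\<lambda>t. t\<^sup>2 * f t - (2 * x) * (t * f t)) = m2 x - (2 * x) * m1 x"
    unfolding m2_def m1_def
    by (subst integral_diff) (auto intro: i(1) integrable_on_mult_right i(2))
  also have "integral {x..} (\<lambda>t. x\<^sup>2 * f t) = x\<^sup>2 * s x"
    using s_tail[OF x] by simp
  finally show ?thesis by simp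
qed

lemma Phi_deriv: assumes x: "x > b0" shows "(\<Phi> has_real_derivative - 2 * G x) (at x)"
proof -
  have "((\<lambda>y. m2 y - 2 * y * m1 y + y\<^sup>2 * s y) has_real_derivative
      (- (x\<^sup>2 * f x)) - (2 * 1 * m1 x + (- (x * f x)) * (2 * x)) + (2 * x * s x + (- f x) * x\<^sup>2)) (at x)"
    by (intro DERIV_add DERIV_diff m2_deriv m1_deriv s_deriv DERIV_mult DERIV_cmult DERIV_ident x
        derivative_eq_intros) auto
  moreover have "(- (x\<^sup>2 * f x)) - (2 * 1 * m1 x + (- (x * f x)) * (2 * x)) + (2 * x * s x + (- f x) * x\<^sup>2)
      = - 2 * G x"
    using G_eq[OF x] by (simp add: algebra_simps power2_eq_square)
  ultimately have "((\<lambda>y. m2 y - 2 * y * m1 y + y\<^sup>2 * s y) has_real_derivative - 2 * G x) (at x)"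
    by simp
  then show ?thesis
  proof (rule has_field_derivative_transform_within_open[where S="{b0<..}"])
    fix y assume "y \<in> {b0<..}"
    then show "m2 y - 2 * y * m1 y + y\<^sup>2 * s y = \<Phi> y" using Phi_eq[of y] b0 by simp
  qed (use x in auto)
qed

lemma Phi_lim: "(\<Phi> \<longlongrightarrow> 0) at_top"
proof (rule tendsto_sandwich[OF _ _ tendsto_const m2_lim])
  show "eventually (\<lambda>x. 0 \<le> \<Phi> x) at_top"
    using eventually_ge_at_top[of 0]
  proof eventually_elim
    case (elim x)
    show ?case unfolding \<Phi>_def
      by (rule integral_nonneg[OF Phi_int[OF elim]]) (use elim f_nn in auto)
  qed
  show "eventually (\<lambda>x. \<Phi> x \<le> m2 x) at_top"
    using eventually_ge_at_top[of 0]
  proof eventually_elim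
    case (elim x)
    show ?case unfolding \<Phi>_def m2_def
    proof (rule integral_le[OF Phi_int[OF elim] Phi_int_parts(1)[OF elim]])
      fix t assume t: "t \<in> {x..}"
      have "(t - x)\<^sup>2 \<le> t\<^sup>2" using t elim by (intro power_mono) auto
      then show "(t - x)\<^sup>2 * f t \<le> t\<^sup>2 * f t" using f_nn[of t] t elim by (intro mult_right_mono) auto
    qed
  qed
qed

lemma G_pos: assumes x: "x \<ge> 0" shows "G x > 0"
proof -
  have "0 < integral {x..x+1} s"
    by (rule integral_pos_strict[OF s_int_interval]) (auto simp: s_pos)
  also have "\<dots> \<le> G x" unfolding G_def
    using s_int_interval s_integrable_from[OF x] by (intro integral_subset_le) (auto simp: s_nn)
  finally show ?thesis .
qed

end


context DA begin

lemma h_bound: obtains A L where "A \<ge> 0" "L > 0" "eventually (\<lambda>t. 0 \<le> h t \<and> h t \<le> A + L * t) at_top"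
proof -
  have "c < c + 1" by simp
  then obtain T where T: "T > b0" "\<And>t. t \<ge> T \<Longrightarrow> g' t \<le> c + 1" using ev_g'_le by blast
  have hT: "h T > 0" using T b0 by (intro h_pos) auto
  have "eventually (\<lambda>t. 0 \<le> h t \<and> h t \<le> h T + (c + 1) * t) at_top"
    using eventually_ge_at_top[of T]
  proof eventually_elim
    case (elim t)
    have "h t \<le> h T + (c + 1) * (t - T)" by (rule h_linear_bound[OF T(2) T(1) elim])
    also have "\<dots> \<le> h T + (c + 1) * t" using c_nonneg T b0 by (simp add: algebra_simps)
    finally show ?case using h_pos[of t] elim T b0 by simp
  qed
  then show ?thesis using that[of "h T" "c + 1"] hT c_nonneg by simp
qed

lemma hs_lim: "((\<lambda>t. h t * s t) \<longlongrightarrow> 0) at_top"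
proof -
  obtain A L where AL: "A \<ge> 0" "L > 0" "eventually (\<lambda>t. 0 \<le> h t \<and> h t \<le> A + L * t) at_top"
    by (rule h_bound)
  show ?thesis
  proof (rule tendsto_sandwich[where f="\<lambda>_. 0" and h="\<lambda>t. A * s t + L * (t * s t)"])
    show "eventually (\<lambda>t. 0 \<le> h t * s t) at_top"
      using AL(3) by (rule eventually_mono) (simp add: s_nn)
    show "eventually (\<lambda>t. h t * s t \<le> A * s t + L * (t * s t)) at_top"
      using AL(3)
    proof (rule eventually_mono)
      fix t assume "0 \<le> h t \<and> h t \<le> A + L * t"
      then have "h t * s t \<le> (A + L * t) * s t" by (intro mult_right_mono) (auto simp: s_nn)
      then show "h t * s t \<le> A * s t + L * (t * s t)" by (simp add: algebra_simps)
    qed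
    have "((\<lambda>t. A * s t + L * (t * s t)) \<longlongrightarrow> A * 0 + L * 0) at_top"
      by (intro tendsto_intros s_lim t_s_lim)
    then show "((\<lambda>t. A * s t + L * (t * s t)) \<longlongrightarrow> 0) at_top" by simp
  qed auto
qed

lemma h2s_lim: "((\<lambda>t. (h t)\<^sup>2 * s t) \<longlongrightarrow> 0) at_top"
proof -
  obtain A L where AL: "A \<ge> 0" "L > 0" "eventually (\<lambda>t. 0 \<le> h t \<and> h t \<le> A + L * t) at_top"
    by (rule h_bound)
  show ?thesis
  proof (rule tendsto_sandwich[where f="\<lambda>_. 0" and h="\<lambda>t. A\<^sup>2 * s t + 2 * A * L * (t * s t) + L\<^sup>2 * (t\<^sup>2 * s t)"])
    show "eventually (\<lambda>t. 0 \<le> (h t)\<^sup>2 * s t) at_top"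
      by (intro always_eventually allI) (simp add: s_nn)
    show "eventually (\<lambda>t. (h t)\<^sup>2 * s t \<le> A\<^sup>2 * s t + 2 * A * L * (t * s t) + L\<^sup>2 * (t\<^sup>2 * s t)) at_top"
      using AL(3)
    proof (rule eventually_mono)
      fix t assume "0 \<le> h t \<and> h t \<le> A + L * t"
      then have "(h t)\<^sup>2 \<le> (A + L * t)\<^sup>2" by (intro power_mono) auto
      then have "(h t)\<^sup>2 * s t \<le> (A + L * t)\<^sup>2 * s t" by (intro mult_right_mono) (auto simp: s_nn)
      then show "(h t)\<^sup>2 * s t \<le> A\<^sup>2 * s t + 2 * A * L * (t * s t) + L\<^sup>2 * (t\<^sup>2 * s t)"
        by (simp add: algebra_simps power2_eq_square)
    qed
    have "((\<lambda>t. A\<^sup>2 * s t + 2 * A * L * (t * s t) + L\<^sup>2 * (t\<^sup>2 * s t)) \<longlongrightarrow> A\<^sup>2 * 0 + 2 * A * L * 0 + L\<^sup>2 * 0) at_top"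
      by (intro tendsto_intros s_lim t_s_lim t2_s_lim)
    then show "((\<lambda>t. A\<^sup>2 * s t + 2 * A * L * (t * s t) + L\<^sup>2 * (t\<^sup>2 * s t)) \<longlongrightarrow> 0) at_top" by simp
  qed auto
qed

lemma spow_lim: "g > 0 \<Longrightarrow> ((\<lambda>t. s t powr g) \<longlongrightarrow> 0) at_top"
  by (rule tendsto_zero_powrI[OF s_lim tendsto_const]) (auto simp: s_nn)

lemma t_spow_lim: assumes g: "1 / r < g" shows "((\<lambda>t. t * s t powr g) \<longlongrightarrow> 0) at_top"
proof -
  have r0: "r > 0" using r_gt by simp
  have g0: "g > 0" using g r0 by (smt (verit) divide_pos_pos)
  have "1 / g < r" using g r0 g0 by (simp add: field_simps)
  then have "((\<lambda>t. t powr (1 / g) * s t) \<longlongrightarrow> 0) at_top"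
    using g0 by (intro tpow_s) auto
  then have "((\<lambda>t. (t powr (1 / g) * s t) powr g) \<longlongrightarrow> 0) at_top"
    using g0 by (intro tendsto_zero_powrI[OF _ tendsto_const]) (auto intro!: always_eventually simp: s_nn)
  then show ?thesis
  proof (rule Lim_transform_eventually)
    show "eventually (\<lambda>t. (t powr (1 / g) * s t) powr g = t * s t powr g) at_top"
      using eventually_gt_at_top[of 0]
    proof (rule eventually_mono)
      fix t :: real assume t: "t > 0"
      have "(t powr (1 / g) * s t) powr g = (t powr (1 / g)) powr g * s t powr g"
        using t s_pos[of t] by (simp add: powr_mult)
      also have "(t powr (1 / g)) powr g = t" using t g0 by (simp add: powr_powr)
      finally show "(t powr (1 / g) * s t) powr g = t * s t powr g" .
    qed
  qed
qed

lemma hsg_lim: assumes g: "1 / r < g" shows "((\<lambda>t. h t * s t powr g) \<longlongrightarrow> 0) at_top"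
proof -
  have r0: "r > 0" using r_gt by simp
  have g0: "g > 0" using g r0 by (smt (verit) divide_pos_pos)
  obtain A L where AL: "A \<ge> 0" "L > 0" "eventually (\<lambda>t. 0 \<le> h t \<and> h t \<le> A + L * t) at_top"
    by (rule h_bound)
  show ?thesis
  proof (rule tendsto_sandwich[where f="\<lambda>_. 0" and h="\<lambda>t. A * s t powr g + L * (t * s t powr g)"])
    show "eventually (\<lambda>t. 0 \<le> h t * s t powr g) at_top"
      using AL(3) by (rule eventually_mono) simp
    show "eventually (\<lambda>t. h t * s t powr g \<le> A * s t powr g + L * (t * s t powr g)) at_top"
      using AL(3)
    proof (rule eventually_mono)
      fix t assume "0 \<le> h t \<and> h t \<le> A + L * t"
      then have "h t * s t powr g \<le> (A + L * t) * s t powr g" by (intro mult_right_mono) auto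
      then show "h t * s t powr g \<le> A * s t powr g + L * (t * s t powr g)" by (simp add: algebra_simps)
    qed
    have "((\<lambda>t. A * s t powr g + L * (t * s t powr g)) \<longlongrightarrow> A * 0 + L * 0) at_top"
      by (intro tendsto_intros spow_lim t_spow_lim g g0)
    then show "((\<lambda>t. A * s t powr g + L * (t * s t powr g)) \<longlongrightarrow> 0) at_top" by simp
  qed auto
qed

end


context DA begin

lemma hs_nz: "x \<ge> 0 \<Longrightarrow> h x * s x \<noteq> 0" using h_pos[of x] s_pos[of x] by simp
lemma h2s_nz: "x \<ge> 0 \<Longrightarrow> (h x)\<^sup>2 * s x \<noteq> 0" using h_pos[of x] s_pos[of x] by simp
lemma hsg_nz: "x \<ge> 0 \<Longrightarrow> h x * s x powr g \<noteq> 0" using h_pos[of x] s_pos[of x] by simp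

lemma ev_g'_lt: "L > c \<Longrightarrow> eventually (\<lambda>x. g' x < L) at_top"
  using order_tendstoD(2)[OF glim] by blast

lemma lim1: "((\<lambda>x. G x / (h x * s x)) \<longlongrightarrow> 1 / (1 - c)) at_top"
proof (rule lhopital_at_top_0[where f'="\<lambda>x. - s x" and g'="\<lambda>x. g' x * s x + (- f x) * h x"])
  show "(G \<longlongrightarrow> 0) at_top" by (rule G_lim)
  show "((\<lambda>x. h x * s x) \<longlongrightarrow> 0) at_top" by (rule hs_lim)
  show "eventually (\<lambda>x. h x * s x \<noteq> 0) at_top"
    using eventually_ge_at_top[of 0] by (rule eventually_mono) (rule hs_nz)
  have c1: "c < 1" using c_lt_half by simp
  have ev: "eventually (\<lambda>x. x > b0 \<and> g' x < 1) at_top"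
    using eventually_gt_at_top[of b0] ev_g'_lt[OF c1] by eventually_elim auto
  have eq: "g' x * s x + (- f x) * h x = s x * (g' x - 1)" if "x \<ge> 0" for x
    using hf[OF that] by (simp add: algebra_simps)
  show "eventually (\<lambda>x. g' x * s x + (- f x) * h x \<noteq> 0) at_top"
    using ev
  proof (rule eventually_mono)
    fix x assume x: "b0 < x \<and> g' x < 1"
    then have x0: "x \<ge> 0" using b0 by simp
    show "g' x * s x + (- f x) * h x \<noteq> 0"
      unfolding eq[OF x0] using s_pos[of x] x by simp
  qed
  show "eventually (\<lambda>x. DERIV G x :> - s x) at_top"
    using eventually_gt_at_top[of b0] by (rule eventually_mono) (rule G_deriv)
  show "eventually (\<lambda>x. DERIV (\<lambda>x. h x * s x) x :> g' x * s x + (- f x) * h x) at_top"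
    using eventually_gt_at_top[of b0] by (rule eventually_mono) (intro DERIV_mult h_deriv s_deriv)
  have "((\<lambda>x. 1 / (1 - g' x)) \<longlongrightarrow> 1 / (1 - c)) at_top"
    using c1 by (intro tendsto_intros glim) auto
  then show "((\<lambda>x. - s x / (g' x * s x + (- f x) * h x)) \<longlongrightarrow> 1 / (1 - c)) at_top"
  proof (rule Lim_transform_eventually)
    show "eventually (\<lambda>x. 1 / (1 - g' x) = - s x / (g' x * s x + (- f x) * h x)) at_top"
      using ev
    proof (rule eventually_mono)
      fix x assume x: "b0 < x \<and> g' x < 1"
      then have x0: "x \<ge> 0" using b0 by simp
      have "s x > 0" by (rule s_pos)
      then show "1 / (1 - g' x) = - s x / (g' x * s x + (- f x) * h x)"
        unfolding eq[OF x0] using x by (simp add: field_simps)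
    qed
  qed
qed

lemma lim2: "((\<lambda>x. \<Phi> x / ((h x)\<^sup>2 * s x)) \<longlongrightarrow> 2 / ((1 - c) * (1 - 2 * c))) at_top"
proof (rule lhopital_at_top_0[where f'="\<lambda>x. - 2 * G x"
      and g'="\<lambda>x. (2 * h x * g' x) * s x + (- f x) * (h x)\<^sup>2"])
  show "(\<Phi> \<longlongrightarrow> 0) at_top" by (rule Phi_lim)
  show "((\<lambda>x. (h x)\<^sup>2 * s x) \<longlongrightarrow> 0) at_top" by (rule h2s_lim)
  show "eventually (\<lambda>x. (h x)\<^sup>2 * s x \<noteq> 0) at_top"
    using eventually_ge_at_top[of 0] by (rule eventually_mono) (rule h2s_nz)
  have c2: "c < 1 / 2" by (rule c_lt_half)
  have ev: "eventually (\<lambda>x. x > b0 \<and> g' x < 1 / 2) at_top"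
    using eventually_gt_at_top[of b0] ev_g'_lt[OF c2] by eventually_elim auto
  have eq: "(2 * h x * g' x) * s x + (- f x) * (h x)\<^sup>2 = h x * s x * (2 * g' x - 1)"
    if "x \<ge> 0" for x
  proof -
    have "f x * (h x)\<^sup>2 = h x * s x" using hf[OF that] by (simp add: power2_eq_square algebra_simps)
    then show ?thesis by (simp add: algebra_simps)
  qed
  show "eventually (\<lambda>x. (2 * h x * g' x) * s x + (- f x) * (h x)\<^sup>2 \<noteq> 0) at_top"
    using ev
  proof (rule eventually_mono)
    fix x assume x: "b0 < x \<and> g' x < 1 / 2"
    then have x0: "x \<ge> 0" using b0 by simp
    show "(2 * h x * g' x) * s x + (- f x) * (h x)\<^sup>2 \<noteq> 0"
      unfolding eq[OF x0] using h_pos[OF x0] s_pos[of x] x by simp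
  qed
  show "eventually (\<lambda>x. DERIV \<Phi> x :> - 2 * G x) at_top"
    using eventually_gt_at_top[of b0] by (rule eventually_mono) (rule Phi_deriv)
  show "eventually (\<lambda>x. DERIV (\<lambda>x. (h x)\<^sup>2 * s x) x :> (2 * h x * g' x) * s x + (- f x) * (h x)\<^sup>2) at_top"
    using eventually_gt_at_top[of b0]
  proof (rule eventually_mono)
    fix x assume x: "b0 < x"
    have "DERIV (\<lambda>x. (h x)\<^sup>2) x :> of_nat 2 * (g' x * h x ^ (2 - Suc 0))"
      by (rule DERIV_power[OF h_deriv[OF x]])
    then have "DERIV (\<lambda>x. (h x)\<^sup>2) x :> 2 * h x * g' x" by (simp add: mult.commute mult.left_commute)
    from DERIV_mult[OF this s_deriv[OF x]]
    show "DERIV (\<lambda>x. (h x)\<^sup>2 * s x) x :> (2 * h x * g' x) * s x + (- f x) * (h x)\<^sup>2" .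
  qed
  have c1: "1 - c \<noteq> 0" "1 - 2 * c \<noteq> 0" using c2 by auto
  have "((\<lambda>x. 2 * (G x / (h x * s x)) * (1 / (1 - 2 * g' x))) \<longlongrightarrow> 2 * (1 / (1 - c)) * (1 / (1 - 2 * c))) at_top"
    using c1 by (intro tendsto_intros lim1 glim) auto
  then have "((\<lambda>x. 2 * (G x / (h x * s x)) * (1 / (1 - 2 * g' x))) \<longlongrightarrow> 2 / ((1 - c) * (1 - 2 * c))) at_top"
    by simp
  then show "((\<lambda>x. - 2 * G x / ((2 * h x * g' x) * s x + (- f x) * (h x)\<^sup>2)) \<longlongrightarrow> 2 / ((1 - c) * (1 - 2 * c))) at_top"
  proof (rule Lim_transform_eventually)
    show "eventually (\<lambda>x. 2 * (G x / (h x * s x)) * (1 / (1 - 2 * g' x)) =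
        - 2 * G x / ((2 * h x * g' x) * s x + (- f x) * (h x)\<^sup>2)) at_top"
      using ev
    proof (rule eventually_mono)
      fix x assume x: "b0 < x \<and> g' x < 1 / 2"
      then have x0: "x \<ge> 0" using b0 by simp
      have "h x > 0" "s x > 0" "1 - 2 * g' x \<noteq> 0" "2 * g' x - 1 \<noteq> 0" using h_pos[OF x0] s_pos[of x] x by auto
      then show "2 * (G x / (h x * s x)) * (1 / (1 - 2 * g' x)) =
        - 2 * G x / ((2 * h x * g' x) * s x + (- f x) * (h x)\<^sup>2)"
        unfolding eq[OF x0] by (simp add: field_simps)
    qed
  qed
qed

definition "I g x = integral {x..} (\<lambda>t. s t powr g)"

lemma lim3: assumes g1: "1 / r < g" and gc: "c < g"
  shows "((\<lambda>x. I g x / (h x * s x powr g)) \<longlongrightarrow> 1 / (g - c)) at_top"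
proof -
  have r0: "r > 0" using r_gt by simp
  have g0: "g > 0" using g1 r0 by (smt (verit) divide_pos_pos)
  have rg: "r * g > 1" using g1 r0 by (simp add: field_simps)
  have sint: "(\<lambda>t. s t powr g) integrable_on {0..}" by (rule spow_integrable[OF g0 rg])
  have ev: "eventually (\<lambda>x. x > b0 \<and> g' x < g) at_top"
    using eventually_gt_at_top[of b0] ev_g'_lt[OF gc] by eventually_elim auto
  have eq: "g' x * s x powr g + (g * s x powr (g - 1) * (- f x)) * h x = s x powr g * (g' x - g)"
    if "x \<ge> 0" for x
  proof -
    have "s x powr (g - 1) * (h x * f x) = s x powr g"
      using hf[OF that] s_pos[of x] by (simp add: powr_diff)
    then show ?thesis by (simp add: algebra_simps)
  qed
  show ?thesis
  proof (rule lhopital_at_top_0[where f'="\<lambda>x. - (s x powr g)"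
      and g'="\<lambda>x. g' x * s x powr g + (g * s x powr (g - 1) * (- f x)) * h x"])
    show "(I g \<longlongrightarrow> 0) at_top" unfolding I_def[abs_def]
      by (rule tail_tendsto0[OF sint]) simp
    show "((\<lambda>x. h x * s x powr g) \<longlongrightarrow> 0) at_top" by (rule hsg_lim[OF g1])
    show "eventually (\<lambda>x. h x * s x powr g \<noteq> 0) at_top"
      using eventually_ge_at_top[of 0] by (rule eventually_mono) (rule hsg_nz)
    show "eventually (\<lambda>x. g' x * s x powr g + (g * s x powr (g - 1) * (- f x)) * h x \<noteq> 0) at_top"
      using ev
    proof (rule eventually_mono)
      fix x assume x: "b0 < x \<and> g' x < g"
      then have x0: "x \<ge> 0" using b0 by simp
      show "g' x * s x powr g + (g * s x powr (g - 1) * (- f x)) * h x \<noteq> 0"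
        unfolding eq[OF x0] using s_pos[of x] x by simp
    qed
    show "eventually (\<lambda>x. DERIV (I g) x :> - (s x powr g)) at_top"
      using eventually_gt_at_top[of b0]
    proof (rule eventually_mono)
      fix x assume x: "b0 < x"
      show "DERIV (I g) x :> - (s x powr g)" unfolding I_def[abs_def]
        by (rule tail_deriv0[OF sint _ _ x]) (auto intro!: continuous_intros s_isCont simp: s_pos less_imp_le g0)
    qed
    show "eventually (\<lambda>x. DERIV (\<lambda>x. h x * s x powr g) x :>
        g' x * s x powr g + (g * s x powr (g - 1) * (- f x)) * h x) at_top"
      using eventually_gt_at_top[of b0] by (rule eventually_mono) (intro DERIV_mult h_deriv spow_deriv)
    have "((\<lambda>x. 1 / (g - g' x)) \<longlongrightarrow> 1 / (g - c)) at_top"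
      using gc by (intro tendsto_intros glim) auto
    then show "((\<lambda>x. - (s x powr g) / (g' x * s x powr g + (g * s x powr (g - 1) * (- f x)) * h x))
        \<longlongrightarrow> 1 / (g - c)) at_top"
    proof (rule Lim_transform_eventually)
      show "eventually (\<lambda>x. 1 / (g - g' x) =
          - (s x powr g) / (g' x * s x powr g + (g * s x powr (g - 1) * (- f x)) * h x)) at_top"
        using ev
      proof (rule eventually_mono)
        fix x assume x: "b0 < x \<and> g' x < g"
        then have x0: "x \<ge> 0" using b0 by simp
        have "s x powr g > 0" using s_pos[of x] by simp
        then show "1 / (g - g' x) =
          - (s x powr g) / (g' x * s x powr g + (g * s x powr (g - 1) * (- f x)) * h x)"
          unfolding eq[OF x0] using x by (simp add: field_simps)
      qed
    qed
  qed
qed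

end


context DA begin

lemma mrl_eq: "mrl F x = G x / s x" by (simp add: mrl_def G_def)

lemma resvar_lim: "((\<lambda>x. resvar F f x / (mrl F x)\<^sup>2) \<longlongrightarrow> 1 / (1 - 2 * c)) at_top"
proof -
  have c2: "c < 1 / 2" by (rule c_lt_half)
  have c1: "1 - c \<noteq> 0" "1 - 2 * c \<noteq> 0" using c2 by auto
  have inv: "((\<lambda>x. inverse (G x / (h x * s x))) \<longlongrightarrow> inverse (1 / (1 - c))) at_top"
    using c1 by (intro tendsto_inverse lim1) auto
  have "((\<lambda>x. (\<Phi> x / ((h x)\<^sup>2 * s x)) * (inverse (G x / (h x * s x)))\<^sup>2 - 1) \<longlongrightarrow>
      (2 / ((1 - c) * (1 - 2 * c))) * (inverse (1 / (1 - c)))\<^sup>2 - 1) at_top"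
    by (intro tendsto_intros lim2 inv)
  moreover have "(2 / ((1 - c) * (1 - 2 * c))) * (inverse (1 / (1 - c)))\<^sup>2 - 1 = 1 / (1 - 2 * c)"
  proof -
    have gen: "\<And>a b::real. a \<noteq> 0 \<Longrightarrow> b \<noteq> 0 \<Longrightarrow> 2 * a - b = 1 \<Longrightarrow>
        (2 / (a * b)) * (inverse (1 / a))\<^sup>2 - 1 = 1 / b"
      by (simp add: field_simps power2_eq_square)
    show ?thesis by (rule gen) (use c1 in auto)
  qed
  ultimately have l: "((\<lambda>x. (\<Phi> x / ((h x)\<^sup>2 * s x)) * (inverse (G x / (h x * s x)))\<^sup>2 - 1) \<longlongrightarrow>
      1 / (1 - 2 * c)) at_top" by simp
  show ?thesis
  proof (rule Lim_transform_eventually[OF l])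
    show "eventually (\<lambda>x. (\<Phi> x / ((h x)\<^sup>2 * s x)) * (inverse (G x / (h x * s x)))\<^sup>2 - 1 =
        resvar F f x / (mrl F x)\<^sup>2) at_top"
      using eventually_ge_at_top[of 0]
    proof (rule eventually_mono)
      fix x :: real assume x: "x \<ge> 0"
      have p: "h x > 0" "s x > 0" "G x > 0" using h_pos[OF x] s_pos[of x] G_pos[OF x] by auto
      have "resvar F f x = \<Phi> x / s x - (G x / s x)\<^sup>2"
        by (simp add: resvar_def \<Phi>_def mrl_eq)
      then show "(\<Phi> x / ((h x)\<^sup>2 * s x)) * (inverse (G x / (h x * s x)))\<^sup>2 - 1 =
        resvar F f x / (mrl F x)\<^sup>2"
        using p by (simp add: mrl_eq field_simps power2_eq_square)
    qed
  qed
qed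

lemma part_a_q:
  "\<exists>q\<in>Qdown. (\<forall>x\<ge>0. (\<lambda>t. q (F t)) integrable_on {x..})
     \<and> (\<exists>M. \<forall>x\<ge>0. (integral {x..} (\<lambda>t. q (F t)) / q (F x)) / mrl F x \<le> M)"
proof -
  have r0: "r > 0" using r_gt by simp
  have ir: "1 / r < 1 / 2" using r_gt by (simp add: field_simps)
  define g where "g = (1 / r + 1 / 2) / 2"
  have gen: "\<And>u v::real. u < v \<Longrightarrow> u < (u + v) / 2 \<and> (u + v) / 2 < v" by auto
  have g1: "1 / r < g" "g < 1 / 2" unfolding g_def using gen[OF ir] by auto
  have "1 / r > 0" using r0 by simp
  then have g0: "g > 0" using g1 by linarith
  have gc: "c < g" using c_le g1 by linarith
  have rg: "r * g > 1" using g1 r0 by (simp add: field_simps)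
  define q where "q u = (1 - u) powr g" for u :: real
  have qF: "(\<lambda>t. q (F t)) = (\<lambda>t. s t powr g)" by (simp add: fun_eq_iff q_def survival_def)
  have qQ: "q \<in> Qdown" unfolding q_def by (rule q_in_Qdown[OF g0 g1(2)])
  have sint: "(\<lambda>t. s t powr g) integrable_on {0..}" by (rule spow_integrable[OF g0 rg])
  have sintx: "(\<lambda>t. s t powr g) integrable_on {x..}" if "x \<ge> 0" for x
    by (rule tail_split(1)[OF sint _ that]) simp
  have gc': "g - c > 0" using gc by simp
  have c1: "1 - c > 0" using c_lt_half by simp
  have ev1: "eventually (\<lambda>x. I g x / (h x * s x powr g) < 2 / (g - c)) at_top"
  proof -
    have "1 / (g - c) < 2 / (g - c)" using gc' by (intro divide_strict_right_mono) auto
    from order_tendstoD(2)[OF lim3[OF g1(1) gc] this] show ?thesis .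
  qed
  have ev2: "eventually (\<lambda>x. G x / (h x * s x) > 1 / (2 * (1 - c))) at_top"
  proof -
    have "1 / (2 * (1 - c)) < 1 / (1 - c)" using c1 by (intro divide_strict_left_mono) auto
    from order_tendstoD(1)[OF lim1 this] show ?thesis .
  qed
  from eventually_conj[OF ev1 eventually_conj[OF ev2 eventually_ge_at_top[of 0]]]
  obtain X where X: "\<And>x. x \<ge> X \<Longrightarrow> I g x / (h x * s x powr g) < 2 / (g - c)
      \<and> G x / (h x * s x) > 1 / (2 * (1 - c)) \<and> x \<ge> 0"
    by (auto simp: eventually_at_top_linorder)
  have X0: "X \<ge> 0" using X[of X] by simp
  define K1 where "K1 = (2 / (g - c)) / (1 / (2 * (1 - c)))"
  define K2 where "K2 = (I g 0 / s X powr g) / G X"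
  have ratio: "(integral {x..} (\<lambda>t. q (F t)) / q (F x)) / mrl F x = (I g x / s x powr g) / (G x / s x)"
    for x by (simp add: qF I_def mrl_eq q_def survival_def[symmetric])
  have "(integral {x..} (\<lambda>t. q (F t)) / q (F x)) / mrl F x \<le> max K1 K2" if x: "x \<ge> 0" for x
  proof (cases "x \<ge> X")
    case True
    have p: "h x > 0" "s x > 0" "s x powr g > 0" "G x > 0" using h_pos[OF x] s_pos[of x] G_pos[OF x] by auto
    have e: "(I g x / s x powr g) / (G x / s x) = (I g x / (h x * s x powr g)) / (G x / (h x * s x))"
      using p by (simp add: field_simps)
    have I0: "I g x \<ge> 0" unfolding I_def by (rule integral_nonneg[OF sintx[OF x]]) simp
    have "(I g x / (h x * s x powr g)) / (G x / (h x * s x)) \<le> (2 / (g - c)) / (1 / (2 * (1 - c)))"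
    proof (rule frac_le)
      show "0 \<le> 2 / (g - c)" using gc' by simp
      show "I g x / (h x * s x powr g) \<le> 2 / (g - c)" using X[OF True] by simp
      show "0 < 1 / (2 * (1 - c))" using c1 by simp
      show "1 / (2 * (1 - c)) \<le> G x / (h x * s x)" using X[OF True] by simp
    qed
    then show ?thesis unfolding ratio e K1_def by simp
  next
    case False
    have pX: "s X powr g > 0" "G X > 0" using s_pos[of X] G_pos[OF X0] by auto
    have I0: "I g x \<ge> 0" unfolding I_def by (rule integral_nonneg[OF sintx[OF x]]) simp
    have "I g x \<le> I g 0" unfolding I_def
      using sintx[OF x] sint by (intro integral_subset_le) (use x in auto)
    moreover have "s X powr g \<le> s x powr g" using False s_antimono[of x X] s_pos[of X] g0
      by (intro powr_mono2) auto
    moreover have "G X \<le> G x / s x"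
    proof -
      have "G X \<le> G x" unfolding G_def
        using s_integrable_from[OF X0] s_integrable_from[OF x] False
        by (intro integral_subset_le) (auto simp: s_nn)
      also have "\<dots> \<le> G x / s x"
        using G_pos[OF x] s_pos[of x] s_le1[of x] by (simp add: le_divide_eq mult_le_cancel_left1)
      finally show ?thesis .
    qed
    ultimately have "(I g x / s x powr g) / (G x / s x) \<le> (I g 0 / s X powr g) / G X"
      using pX I0 by (intro frac_le divide_nonneg_pos) (auto intro: order_trans[OF I0] divide_left_mono)
    then show ?thesis unfolding ratio K2_def by simp
  qed
  then show ?thesis using qQ sintx qF by (intro bexI[of _ q]) auto
qed

lemma part_a:
  "0 \<le> c \<and> c \<le> 1 / r
    \<and> (\<exists>q\<in>Qdown. (\<forall>x\<ge>0. (\<lambda>t. q (F t)) integrable_on {x..})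
          \<and> (\<exists>M. \<forall>x\<ge>0. (integral {x..} (\<lambda>t. q (F t)) / q (F x)) / mrl F x \<le> M))
    \<and> ((\<lambda>x. resvar F f x / (mrl F x)\<^sup>2) \<longlongrightarrow> 1 / (1 - 2 * c)) at_top"
  using c_nonneg c_le part_a_q resvar_lim by blast

end




theorem proposition3p1:
  fixes F f :: "real \<Rightarrow> real" and r :: real
  assumes F_neg: "\<And>x. x < 0 \<Longrightarrow> F x = 0"
    and density: "\<And>x. x \<ge> 0 \<Longrightarrow> (f has_integral F x) {0..x}"
    and f_pos: "\<And>x. x \<ge> 0 \<Longrightarrow> f x > 0"
    and F_lim: "(F \<longlongrightarrow> 1) at_top"
    and F_cont: "continuous_on UNIV F"
    and r_gt: "r > 2"
    and moment: "(\<lambda>x. x powr r * f x) integrable_on {0..}"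
  shows
    "(\<forall>x0 c g'. (\<forall>x\<ge>x0. ((\<lambda>y. survival F y / f y) has_real_derivative g' x) (at x within {x0..}))
        \<and> (g' \<longlongrightarrow> c) at_top \<longrightarrow>
        0 \<le> c \<and> c \<le> 1 / r
        \<and> (\<exists>q\<in>Qdown. (\<forall>x\<ge>0. (\<lambda>t. q (F t)) integrable_on {x..})
              \<and> (\<exists>M. \<forall>x\<ge>0. (integral {x..} (\<lambda>t. q (F t)) / q (F x)) / mrl F x \<le> M))
        \<and> ((\<lambda>x. resvar F f x / (mrl F x)\<^sup>2) \<longlongrightarrow> 1 / (1 - 2 * c)) at_top)
   \<and> (\<forall>\<gamma>. 1 / r < \<gamma> \<and> \<gamma> < 1 / 2
        \<and> Limsup at_top (\<lambda>x::real. ereal (survival F x powr (1 + \<gamma>) / f x)) < \<infinity> \<longrightarrow>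
        (\<exists>q\<in>Qdown. (\<lambda>t. q (F t)) integrable_on {0..}
              \<and> (\<exists>M. \<forall>x\<ge>0. mrl F x * q (F x) \<le> M)))"
proof -
  interpret D F f r
    using F_neg density f_pos F_lim F_cont r_gt moment by unfold_locales
  have A: "\<forall>x0 c g'. (\<forall>x\<ge>x0. ((\<lambda>y. survival F y / f y) has_real_derivative g' x) (at x within {x0..}))
        \<and> (g' \<longlongrightarrow> c) at_top \<longrightarrow>
        0 \<le> c \<and> c \<le> 1 / r
        \<and> (\<exists>q\<in>Qdown. (\<forall>x\<ge>0. (\<lambda>t. q (F t)) integrable_on {x..})
              \<and> (\<exists>M. \<forall>x\<ge>0. (integral {x..} (\<lambda>t. q (F t)) / q (F x)) / mrl F x \<le> M))
        \<and> ((\<lambda>x. resvar F f x / (mrl F x)\<^sup>2) \<longlongrightarrow> 1 / (1 - 2 * c)) at_top"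
  proof (intro allI impI)
    fix x0 c :: real and g' :: "real \<Rightarrow> real"
    assume H: "(\<forall>x\<ge>x0. ((\<lambda>y. survival F y / f y) has_real_derivative g' x) (at x within {x0..}))
        \<and> (g' \<longlongrightarrow> c) at_top"
    interpret DA F f r x0 c g'
      by unfold_locales (use H in auto)
    show "0 \<le> c \<and> c \<le> 1 / r
        \<and> (\<exists>q\<in>Qdown. (\<forall>x\<ge>0. (\<lambda>t. q (F t)) integrable_on {x..})
              \<and> (\<exists>M. \<forall>x\<ge>0. (integral {x..} (\<lambda>t. q (F t)) / q (F x)) / mrl F x \<le> M))
        \<and> ((\<lambda>x. resvar F f x / (mrl F x)\<^sup>2) \<longlongrightarrow> 1 / (1 - 2 * c)) at_top"
      by (rule part_a)
  qed
  have B: "\<forall>\<gamma>. 1 / r < \<gamma> \<and> \<gamma> < 1 / 2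
        \<and> Limsup at_top (\<lambda>x::real. ereal (survival F x powr (1 + \<gamma>) / f x)) < \<infinity> \<longrightarrow>
        (\<exists>q\<in>Qdown. (\<lambda>t. q (F t)) integrable_on {0..}
              \<and> (\<exists>M. \<forall>x\<ge>0. mrl F x * q (F x) \<le> M))"
    using part_b by blast
  show ?thesis using A B by (intro conjI)
qed


end
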